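(* Let $\mathbb{F}$ be a field with $\mathrm{char}(\mathbb{F})\neq 2,3$. The map $$(\beta_3,\beta_6,\dots,\beta_{3k})\mapsto\Big(\sum_{j=1}^k\beta_{3j}\,p_{\bar1,3j}\Big)$$ (ideal generated by the indicated element) induces a bijection between the set of tuples $(\beta_3,\dots,\beta_{3k})\in\mathbb{F}^k$ with $k\in\mathbb{N}$ and $\beta_{3k}\neq0$, taken up to non-zero scalar multiples, and the set of non-zero ideals $I$ of $\hat{\mathcal{H}}$ with $I\subseteq J$. The inverse map sends $I$ to the tuple of coefficients of an element of minimal $J$-degree in $I$. In particular, every ideal contained in $J$ is principal.
   Context: Notation: $\mathbb{N}=\{1,2,3,\dots\}$, $3\mathbb{N}=\{3,6,9,\dots\}$; for $r\in\mathbb{Z}$, $\bar r=r+3\mathbb{Z}\in\mathbb{Z}_3$. The algebra $\hat{\mathcal{H}}$ is the commutative $\mathbb{F}$-algebra with basis $\{a_i:i\in\mathbb{Z}\}\cup\{s_j:j\in\mathbb{N}\}\cup\{p_{\bar r,k}:\bar r\in\{\bar1,\bar2\},\ k\in 3\mathbb{N}\}$, where $s_0=0$, $p_{\bar r,j}=0$ for all $\bar r$ whenever $j\notin 3\mathbb{N}$, $p_{\bar 0,j}=-p_{\bar1,j}-p_{\bar2,j}$, $z_{\bar r,j}=p_{\bar r+\bar1,j}-p_{\bar r-\bar1,j}$, and for $i,i'\in\mathbb{Z}$, $j,l\in\mathbb{N}$, $h,k\in3\mathbb{N}$, $\bar r,\bar t\in\mathbb{Z}_3$: (H1) $a_ia_{i'}=\tfrac12(a_i+a_{i'})+s_{|i-i'|}+z_{\bar\imath,|i-i'|}$;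 (H2) $a_is_j=-\tfrac34a_i+\tfrac38(a_{i-j}+a_{i+j})+\tfrac32 s_j-z_{\bar\imath,j}$; (H3) $a_ip_{\bar r,k}=\tfrac32p_{\bar r,k}-p_{-(\bar\imath+\bar r),k}$; (H4) $s_js_l=\tfrac34(s_j+s_l)-\tfrac38(s_{|j-l|}+s_{j+l})$; (H5) $s_jp_{\bar r,k}=\tfrac34(p_{\bar r,j}+p_{\bar r,k})-\tfrac38(p_{\bar r,|j-k|}+p_{\bar r,j+k})$; (H6) $p_{\bar r,h}p_{\bar t,k}=\tfrac14(z_{-(\bar r+\bar t),h}+z_{-(\bar r+\bar t),k})-\tfrac18(z_{-(\bar r+\bar t),|h-k|}+z_{-(\bar r+\bar t),h+k})$. $J=\langle p_{\bar1,j},p_{\bar2,j}:j\in3\mathbb{N}\rangle$ (an ideal). Every non-zero $x\in J$ is uniquely $x=\sum_{j\in3\mathbb{N},\,j\le 3m}\sum_{\bar r\in\{\bar1,\bar2\}}\beta_{\bar r,j}p_{\bar r,j}$ with $\beta_{\bar r,3m}\neq0$ for some $\bar r$; its $p$-level is $3m$ and its $J$-degree is $3m+\sum_{r\in\{1,2\},\ \beta_{\bar r,3m}\neq0}\tfrac r4$. *)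

theory Defs
  imports Complex_Main
begin

text \<open>Basis indices of the algebra H-hat:
  A i  = a_i (i :: int),  S j = s_j (valid for j >= 1),
  P1 k = p_{1,k}, P2 k = p_{2,k} (valid for k in 3N = {3,6,9,...}).\<close>
datatype bidx = A int | S nat | P1 nat | P2 nat

fun valid_idx :: "bidx \<Rightarrow> bool" where
  "valid_idx (A i) = True"
| "valid_idx (S j) = (j \<ge> 1)"
| "valid_idx (P1 k) = (k > 0 \<and> 3 dvd k)"
| "valid_idx (P2 k) = (k > 0 \<and> 3 dvd k)"

definition supp :: "(bidx \<Rightarrow> 'a::zero) \<Rightarrow> bidx set" where
  "supp x = {b. x b \<noteq> 0}"

definition Hc :: "(bidx \<Rightarrow> 'a::field) set" where
  "Hc = {x. finite (supp x) \<and> supp x \<subseteq> {b. valid_idx b}}"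

definition zerov :: "bidx \<Rightarrow> 'a::field" where "zerov = (\<lambda>b. 0)"
definition vadd :: "(bidx \<Rightarrow> 'a::field) \<Rightarrow> (bidx \<Rightarrow> 'a) \<Rightarrow> bidx \<Rightarrow> 'a" where
  "vadd x y = (\<lambda>b. x b + y b)"
definition vsub :: "(bidx \<Rightarrow> 'a::field) \<Rightarrow> (bidx \<Rightarrow> 'a) \<Rightarrow> bidx \<Rightarrow> 'a" where
  "vsub x y = (\<lambda>b. x b - y b)"
definition smul :: "'a::field \<Rightarrow> (bidx \<Rightarrow> 'a) \<Rightarrow> bidx \<Rightarrow> 'a" where
  "smul c x = (\<lambda>b. c * x b)"

definition ev :: "bidx \<Rightarrow> bidx \<Rightarrow> 'a::field" where
  "ev b = (\<lambda>c. if c = b then 1 else 0)"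

definition av :: "int \<Rightarrow> bidx \<Rightarrow> 'a::field" where "av i = ev (A i)"

text \<open>s_j, with the convention s_0 = 0.\<close>
definition sv :: "nat \<Rightarrow> bidx \<Rightarrow> 'a::field" where
  "sv j = (if j = 0 then zerov else ev (S j))"

text \<open>p_{r,j} for r an integer taken mod 3; p_{r,j} = 0 unless j in 3N,
  and p_{0,j} = - p_{1,j} - p_{2,j}.\<close>
definition pv :: "int \<Rightarrow> nat \<Rightarrow> bidx \<Rightarrow> 'a::field" where
  "pv r j = (if j > 0 \<and> 3 dvd j then
      (if r mod 3 = 1 then ev (P1 j)
       else if r mod 3 = 2 then ev (P2 j)
       else vsub (smul (-1) (ev (P1 j))) (ev (P2 j)))
    else zerov)"

definition zv :: "int \<Rightarrow> nat \<Rightarrow> bidx \<Rightarrow> 'a::field" where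
  "zv r j = vsub (pv (r + 1) j) (pv (r - 1) j)"

definition adiff :: "nat \<Rightarrow> nat \<Rightarrow> nat" where
  "adiff j l = nat \<bar>int j - int l\<bar>"

text \<open>Product of basis elements, table (H1)--(H6), extended symmetrically.\<close>
definition bm_as :: "int \<Rightarrow> nat \<Rightarrow> bidx \<Rightarrow> 'a::field" where
  "bm_as i j = vadd (vadd (smul (-3/4) (av i)) (smul (3/8) (vadd (av (i - int j)) (av (i + int j)))))
                    (vsub (smul (3/2) (sv j)) (zv i j))"

definition bm_ap :: "int \<Rightarrow> int \<Rightarrow> nat \<Rightarrow> bidx \<Rightarrow> 'a::field" where
  "bm_ap i r k = vsub (smul (3/2) (pv r k)) (pv (-(i + r)) k)"

definition bm_sp :: "nat \<Rightarrow> int \<Rightarrow> nat \<Rightarrow> bidx \<Rightarrow> 'a::field" where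
  "bm_sp j r k = vsub (smul (3/4) (vadd (pv r j) (pv r k)))
                      (smul (3/8) (vadd (pv r (adiff j k)) (pv r (j + k))))"

definition bm_pp :: "int \<Rightarrow> nat \<Rightarrow> int \<Rightarrow> nat \<Rightarrow> bidx \<Rightarrow> 'a::field" where
  "bm_pp r h t k = vsub (smul (1/4) (vadd (zv (-(r + t)) h) (zv (-(r + t)) k)))
                        (smul (1/8) (vadd (zv (-(r + t)) (adiff h k)) (zv (-(r + t)) (h + k))))"

fun bm :: "bidx \<Rightarrow> bidx \<Rightarrow> bidx \<Rightarrow> 'a::field" where
  "bm (A i) (A i') = vadd (vadd (smul (1/2) (vadd (av i) (av i'))) (sv (nat \<bar>i - i'\<bar>)))
                          (zv i (nat \<bar>i - i'\<bar>))"
| "bm (A i) (S j) = bm_as i j"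
| "bm (S j) (A i) = bm_as i j"
| "bm (A i) (P1 k) = bm_ap i 1 k"
| "bm (A i) (P2 k) = bm_ap i 2 k"
| "bm (P1 k) (A i) = bm_ap i 1 k"
| "bm (P2 k) (A i) = bm_ap i 2 k"
| "bm (S j) (S l) = vsub (smul (3/4) (vadd (sv j) (sv l)))
                         (smul (3/8) (vadd (sv (adiff j l)) (sv (j + l))))"
| "bm (S j) (P1 k) = bm_sp j 1 k"
| "bm (S j) (P2 k) = bm_sp j 2 k"
| "bm (P1 k) (S j) = bm_sp j 1 k"
| "bm (P2 k) (S j) = bm_sp j 2 k"
| "bm (P1 h) (P1 k) = bm_pp 1 h 1 k"
| "bm (P1 h) (P2 k) = bm_pp 1 h 2 k"
| "bm (P2 h) (P1 k) = bm_pp 2 h 1 k"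
| "bm (P2 h) (P2 k) = bm_pp 2 h 2 k"

definition hmult :: "(bidx \<Rightarrow> 'a::field) \<Rightarrow> (bidx \<Rightarrow> 'a) \<Rightarrow> bidx \<Rightarrow> 'a" where
  "hmult x y = (\<lambda>c. \<Sum>b\<in>supp x. \<Sum>b'\<in>supp y. x b * y b' * bm b b' c)"

text \<open>Ideals of the (commutative, non-associative) algebra H-hat.\<close>
definition is_ideal :: "(bidx \<Rightarrow> 'a::field) set \<Rightarrow> bool" where
  "is_ideal I \<longleftrightarrow> I \<subseteq> Hc \<and> zerov \<in> I \<and>
     (\<forall>x\<in>I. \<forall>y\<in>I. vadd x y \<in> I) \<and>
     (\<forall>c. \<forall>x\<in>I. smul c x \<in> I) \<and>
     (\<forall>x\<in>I. \<forall>y\<in>Hc. hmult y x \<in> I)"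

definition ideal_gen :: "(bidx \<Rightarrow> 'a::field) set \<Rightarrow> (bidx \<Rightarrow> 'a) set" where
  "ideal_gen G = \<Inter>{I. is_ideal I \<and> G \<subseteq> I}"

definition Jid :: "(bidx \<Rightarrow> 'a::field) set" where
  "Jid = ideal_gen {ev b | b k. k > 0 \<and> 3 dvd k \<and> (b = P1 k \<or> b = P2 k)}"

definition p_level :: "(bidx \<Rightarrow> 'a::field) \<Rightarrow> nat" where
  "p_level x = Max {k. x (P1 k) \<noteq> 0 \<or> x (P2 k) \<noteq> 0}"

definition J_degree :: "(bidx \<Rightarrow> 'a::field) \<Rightarrow> real" where
  "J_degree x = real (p_level x)
     + (if x (P1 (p_level x)) \<noteq> 0 then 1/4 else 0)
     + (if x (P2 (p_level x)) \<noteq> 0 then 2/4 else 0)"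

text \<open>Tuples (beta_3, ..., beta_{3k}) as lists of length k >= 1 with last entry non-zero.\<close>
definition valid_tuple :: "'a::field list \<Rightarrow> bool" where
  "valid_tuple \<beta> \<longleftrightarrow> \<beta> \<noteq> [] \<and> last \<beta> \<noteq> 0"

definition tuple_elt :: "'a::field list \<Rightarrow> bidx \<Rightarrow> 'a" where
  "tuple_elt \<beta> = (\<lambda>c. \<Sum>j<length \<beta>. (\<beta> ! j) * ev (P1 (3 * (j + 1))) c)"

end

theory Submission
  imports Defs "HOL-Computational_Algebra.Polynomial"
begin
fun cheb :: "nat \<Rightarrow> 'a::comm_ring_1 poly" where
  "cheb 0 = 1"
| "cheb (Suc 0) = [:0,1:]"
| "cheb (Suc (Suc n)) = smult 2 ([:0,1:] * cheb (Suc n)) - cheb n"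

lemma cheb_rec: "n \<ge> 1 \<Longrightarrow> smult 2 ([:0,1:] * cheb n) = cheb (Suc n) + cheb (n - 1)"
  by (cases n) auto

lemma cheb_prod: "m \<le> n \<Longrightarrow> (cheb (m + n) :: 'a::comm_ring_1 poly) + cheb (n - m) = smult 2 (cheb m * cheb n)"
proof (induction m arbitrary: n rule: less_induct)
  case (less m)
  show ?case
  proof (cases m)
    case 0 then show ?thesis by (simp add: numeral_mult_conv_smult)
  next
    case (Suc m1)
    show ?thesis
    proof (cases m1)
      case 0
      with Suc less.prems have "n \<ge> 1" by simp
      then show ?thesis using Suc 0 cheb_rec[of n, where 'a='a] by (simp add: algebra_simps)
    next
      case (Suc m2)
      have m: "m = Suc (Suc m2)" using \<open>m = Suc m1\<close> Suc by simp
      have IH1: "(cheb (Suc m2 + n) :: 'a poly) + cheb (n - Suc m2) = smult 2 (cheb (Suc m2) * cheb n)"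
        using less.IH[of "Suc m2" n] less.prems m by simp
      have IH2: "(cheb (m2 + n) :: 'a poly) + cheb (n - m2) = smult 2 (cheb m2 * cheb n)"
        using less.IH[of "m2" n] less.prems m by simp
      have r1: "smult 2 ([:0,1:] * cheb (Suc m2 + n) :: 'a poly) = cheb (Suc (Suc m2 + n)) + cheb (m2 + n)"
        using cheb_rec[of "Suc m2 + n", where 'a='a] by simp
      have r2: "smult 2 ([:0,1:] * cheb (n - Suc m2) :: 'a poly) = cheb (Suc (n - Suc m2)) + cheb (n - Suc m2 - 1)"
        using cheb_rec[of "n - Suc m2", where 'a='a] less.prems m by simp
      have e1: "Suc (n - Suc m2) = n - m2" using less.prems m by simp
      have e2: "n - Suc m2 - 1 = n - m" using less.prems m by simp
      have cm: "cheb m = 2 * ([:0,1:] * cheb (Suc m2)) - (cheb m2 :: 'a poly)"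
        by (simp only: m cheb.simps numeral_mult_conv_smult)
      have "smult 2 (cheb m * cheb n :: 'a poly) = 2 * (cheb m * cheb n)"
        by (simp add: numeral_mult_conv_smult)
      also have "\<dots> = [:0,1:] * (2 * (2 * (cheb (Suc m2) * cheb n))) - 2 * (cheb m2 * cheb n)"
        unfolding cm by (simp add: algebra_simps del: mult_pCons_left mult_pCons_right)
      also have "\<dots> = [:0,1:] * (2 * (cheb (Suc m2 + n) + cheb (n - Suc m2))) - (cheb (m2 + n) + cheb (n - m2))"
        by (simp only: IH1 IH2 numeral_mult_conv_smult)
      also have "\<dots> = 2 * ([:0,1:] * cheb (Suc m2 + n)) + 2 * ([:0,1:] * cheb (n - Suc m2)) - (cheb (m2 + n) + cheb (n - m2))"
        by (simp add: algebra_simps del: mult_pCons_left mult_pCons_right)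
      also have "\<dots> = cheb (m + n) + cheb (n - m)"
        using r1 r2 e1 e2 m by (simp add: numeral_mult_conv_smult)
      finally show ?thesis by simp
    qed
  qed
qed

lemma cheb_deg: "degree (cheb n :: 'a::comm_ring_1 poly) \<le> n \<and> coeff (cheb n :: 'a poly) n = (if n = 0 then 1 else 2 ^ (n - 1))"
proof (induction n rule: cheb.induct)
  case 1 then show ?case by simp
next
  case 2 then show ?case by simp
next
  case (3 n)
  have d: "degree (cheb (Suc (Suc n)) :: 'a poly) \<le> Suc (Suc n)"
    using 3 by (intro degree_le) (auto simp: coeff_eq_0 coeff_pCons split: nat.split)
  have c: "coeff (cheb n :: 'a poly) (Suc (Suc n)) = 0"
    using 3 by (simp add: coeff_eq_0)
  show ?case using d c 3 by simp
qed

lemma cheb_coeff_ne: "(2::'a::field) \<noteq> 0 \<Longrightarrow> coeff (cheb n :: 'a poly) n \<noteq> 0"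
  using cheb_deg[of n, where 'a='a] by simp

lemma adiff_eq: "adiff a b = (if a \<le> b then b - a else a - b)"
  by (auto simp: adiff_def)

definition Ut :: "nat \<Rightarrow> 'a::field poly" where
  "Ut k = (if 3 dvd k then 1 - cheb (k div 3) else 0)"

definition sig :: "nat \<Rightarrow> 'a::field poly" where
  "sig j = (if 3 dvd j then Ut j else 1)"

lemma Ut0 [simp]: "Ut 0 = 0" by (simp add: Ut_def)

lemma Ut_deg: "degree (Ut k) \<le> k div 3"
proof -
  have "degree (1 - cheb (k div 3) :: 'a poly) \<le> k div 3"
    using cheb_deg[of "k div 3", where 'a='a] by (intro degree_diff_le) auto
  then show ?thesis by (simp add: Ut_def)
qed

lemma Ut_coeff: "(2::'a::field) \<noteq> 0 \<Longrightarrow> k > 0 \<Longrightarrow> 3 dvd k \<Longrightarrow> coeff (Ut k :: 'a poly) (k div 3) \<noteq> 0"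
  using cheb_deg[of "k div 3", where 'a='a] by (auto simp: Ut_def coeff_1)

lemma adiff_dvd: "3 dvd j \<Longrightarrow> 3 dvd k \<Longrightarrow> 3 dvd adiff j k \<and> adiff j k div 3 = adiff (j div 3) (k div 3)"
  unfolding adiff_def by (elim dvdE) (auto simp: nat_abs_int_diff)

lemma adiff_ndvd: "\<not> 3 dvd j \<Longrightarrow> 3 dvd k \<Longrightarrow> \<not> 3 dvd adiff j k \<and> \<not> 3 dvd (j + k)"
  unfolding adiff_def by (elim dvdE) (auto simp: nat_abs_int_diff, presburger+)

lemma Ut_prod: "3 dvd k \<Longrightarrow> smult 2 (Ut j + Ut k) - (Ut (adiff j k) + Ut (j + k)) = smult 2 (sig j * Ut k :: 'a::field poly)"
proof (cases "3 dvd j")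
  case False
  assume k: "3 dvd k"
  then show ?thesis using False adiff_ndvd[OF False k] by (simp add: Ut_def sig_def algebra_simps)
next
  case True
  assume k: "3 dvd k"
  obtain a where a: "j = 3 * a" using True by blast
  obtain b where b: "k = 3 * b" using k by blast
  have ad: "adiff j k = 3 * adiff a b" unfolding a b adiff_def by (auto simp: nat_abs_int_diff)
  have "cheb (a + b) + cheb (adiff a b) = smult 2 (cheb a * cheb b :: 'a poly)"
  proof (cases "a \<le> b")
    case True then show ?thesis using cheb_prod[OF True, where 'a='a] by (simp add: adiff_eq)
  next
    case False then show ?thesis using cheb_prod[of b a, where 'a='a] by (simp add: adiff_eq add.commute mult.commute)
  qed
  then show ?thesis using a b ad by (simp add: Ut_def sig_def algebra_simps numeral_mult_conv_smult[symmetric])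
qed

definition fsv :: "(bidx \<Rightarrow> 'a::field) \<Rightarrow> bool" where "fsv v = finite (supp v)"
definition isP :: "bidx \<Rightarrow> bool" where "isP c = (\<exists>k. c = P1 k \<or> c = P2 k)"
definition offP :: "(bidx \<Rightarrow> 'a::field) \<Rightarrow> bool" where "offP v = (\<forall>c. \<not> isP c \<longrightarrow> v c = 0)"
definition Jc :: "(bidx \<Rightarrow> 'a::field) set" where "Jc = {x \<in> Hc. offP x}"

definition PhiS :: "(nat \<Rightarrow> bidx) \<Rightarrow> (bidx \<Rightarrow> 'a::field) \<Rightarrow> 'a poly" where
  "PhiS sel v = (\<Sum>k\<in>{k. v (sel k) \<noteq> 0}. smult (v (sel k)) (Ut k))"

definition rho :: "(nat \<Rightarrow> bidx) \<Rightarrow> int \<Rightarrow> 'a::field" where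
  "rho sel r = (if sel = P1 then (if r mod 3 = 1 then 1 else if r mod 3 = 2 then 0 else -1)
                else (if r mod 3 = 1 then 0 else if r mod 3 = 2 then 1 else -1))"

lemma supp_ev [simp]: "supp (ev b :: bidx \<Rightarrow> 'a::field) = {b}"
  by (auto simp: supp_def ev_def)
lemma supp_zerov [simp]: "supp (zerov :: bidx \<Rightarrow> 'a::field) = {}"
  by (auto simp: supp_def zerov_def)
lemma supp_vadd: "supp (vadd x y) \<subseteq> supp x \<union> supp y"
  by (auto simp: supp_def vadd_def)
lemma supp_vsub: "supp (vsub x y) \<subseteq> supp x \<union> supp y"
  by (auto simp: supp_def vsub_def)
lemma supp_smul: "supp (smul c x) \<subseteq> supp x"
  by (auto simp: supp_def smul_def)

lemma Hc_vadd [simp]: "x \<in> Hc \<Longrightarrow> y \<in> Hc \<Longrightarrow> vadd x y \<in> Hc"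
  using supp_vadd[of x y] unfolding Hc_def by (auto intro: finite_subset)
lemma Hc_vsub [simp]: "x \<in> Hc \<Longrightarrow> y \<in> Hc \<Longrightarrow> vsub x y \<in> Hc"
  using supp_vsub[of x y] unfolding Hc_def by (auto intro: finite_subset)
lemma Hc_smul [simp]: "x \<in> Hc \<Longrightarrow> smul c x \<in> Hc"
  using supp_smul[of c x] unfolding Hc_def by (auto intro: finite_subset)
lemma Hc_zerov [simp]: "zerov \<in> Hc" by (simp add: Hc_def)
lemma Hc_ev [simp]: "valid_idx b \<Longrightarrow> ev b \<in> Hc" by (simp add: Hc_def)
lemma Hc_av [simp]: "av i \<in> Hc" by (simp add: av_def)
lemma Hc_sv [simp]: "sv j \<in> Hc" by (simp add: sv_def)
lemma Hc_pv [simp]: "pv r k \<in> Hc" by (simp add: pv_def)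
lemma Hc_zv [simp]: "zv r k \<in> Hc" by (simp add: zv_def)
lemma Hc_bm [simp]: "bm b b' \<in> Hc"
  by (cases b; cases b') (simp_all add: bm_as_def bm_ap_def bm_sp_def bm_pp_def)

lemma offP_vadd [simp]: "offP x \<Longrightarrow> offP y \<Longrightarrow> offP (vadd x y)" by (simp add: offP_def vadd_def)
lemma offP_vsub [simp]: "offP x \<Longrightarrow> offP y \<Longrightarrow> offP (vsub x y)" by (simp add: offP_def vsub_def)
lemma offP_smul [simp]: "offP x \<Longrightarrow> offP (smul c x)" by (simp add: offP_def smul_def)
lemma offP_zerov [simp]: "offP zerov" by (simp add: offP_def zerov_def)
lemma offP_pv [simp]: "offP (pv r k)" by (simp add: offP_def pv_def ev_def isP_def zerov_def vsub_def smul_def)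
lemma offP_zv [simp]: "offP (zv r k)" by (simp add: zv_def)
lemma offP_bm: "isP b' \<Longrightarrow> offP (bm b b')"
  unfolding isP_def by (cases b) (auto simp: bm_ap_def bm_sp_def bm_pp_def)

lemma Jc_bm: "isP b' \<Longrightarrow> bm b b' \<in> Jc"
  using offP_bm by (simp add: Jc_def)

lemma fsv_Hc: "x \<in> Hc \<Longrightarrow> fsv x" by (simp add: Hc_def fsv_def)

lemma lin_closed:
  assumes "zerov \<in> SS" "\<And>x y. x \<in> SS \<Longrightarrow> y \<in> SS \<Longrightarrow> vadd x y \<in> SS" "\<And>c x. x \<in> SS \<Longrightarrow> smul c x \<in> SS"
    and "finite F" "\<And>i. i \<in> F \<Longrightarrow> f i \<in> SS"
  shows "(\<lambda>c. \<Sum>i\<in>F. a i * f i c) \<in> SS"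
  using assms(4,5)
proof (induction F rule: finite_induct)
  case empty
  then show ?case using assms(1) by (simp add: zerov_def)
next
  case (insert i F)
  have "(\<lambda>c. \<Sum>i\<in>insert i F. a i * f i c) = vadd (smul (a i) (f i)) (\<lambda>c. \<Sum>i\<in>F. a i * f i c)"
    using insert by (simp add: vadd_def smul_def fun_eq_iff)
  then show ?case using insert assms(2,3) by simp
qed

lemma hmult_ev: "hmult (ev b) x = (\<lambda>c. \<Sum>b'\<in>supp x. x b' * bm b b' c)"
  unfolding hmult_def supp_ev by (simp add: ev_def)

lemma hmult_decomp: "hmult y x = (\<lambda>c. \<Sum>b\<in>supp y. y b * hmult (ev b) x c)"
  unfolding hmult_ev by (simp add: hmult_def sum_distrib_left mult.assoc)

lemma is_ideal_Hc: "is_ideal Hc"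
  unfolding is_ideal_def
proof (intro conjI ballI allI)
  fix x y :: "bidx \<Rightarrow> 'a" assume x: "x \<in> Hc" and y: "y \<in> Hc"
  have fx: "finite (supp x)" "finite (supp y)" using x y by (auto simp: Hc_def)
  have "hmult (ev b) x \<in> Hc" for b
    unfolding hmult_ev by (rule lin_closed) (auto simp: fx)
  then show "hmult y x \<in> Hc"
    unfolding hmult_decomp[of y] by (intro lin_closed) (auto simp: fx)
qed auto

lemma Jc_sub: "Jc \<subseteq> Hc" by (auto simp: Jc_def)

lemma Jc_vadd [simp]: "x \<in> Jc \<Longrightarrow> y \<in> Jc \<Longrightarrow> vadd x y \<in> Jc" by (simp add: Jc_def)
lemma Jc_vsub [simp]: "x \<in> Jc \<Longrightarrow> y \<in> Jc \<Longrightarrow> vsub x y \<in> Jc" by (simp add: Jc_def)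
lemma Jc_smul [simp]: "x \<in> Jc \<Longrightarrow> smul c x \<in> Jc" by (simp add: Jc_def)
lemma Jc_zerov [simp]: "zerov \<in> Jc" by (simp add: Jc_def)

lemma is_ideal_Jc: "is_ideal Jc"
  unfolding is_ideal_def
proof (intro conjI ballI allI)
  fix x y :: "bidx \<Rightarrow> 'a" assume x: "x \<in> Jc" and y: "y \<in> Hc"
  have sx: "b' \<in> supp x \<Longrightarrow> isP b'" for b'
    using x by (auto simp: Jc_def offP_def supp_def)
  have fx: "finite (supp x)" "finite (supp y)" using x y by (auto simp: Hc_def Jc_def)
  have "hmult (ev b) x \<in> Jc" for b
    unfolding hmult_ev by (rule lin_closed) (auto simp: fx sx Jc_bm)
  then show "hmult y x \<in> Jc"
    unfolding hmult_decomp[of y] by (intro lin_closed) (auto simp: fx)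
qed (auto simp: Jc_def)

lemma smult_sum_right: "smult c (\<Sum>i\<in>AA. f i) = (\<Sum>i\<in>AA. smult c (f i))"
  by (induct AA rule: infinite_finite_induct) (auto simp: smult_add_right)

definition selok :: "(nat \<Rightarrow> bidx) \<Rightarrow> bool" where "selok sel = (sel = P1 \<or> sel = P2)"

lemma selok_inj: "selok sel \<Longrightarrow> inj sel"
  by (auto simp: selok_def inj_def)

lemma fin_sel: "selok sel \<Longrightarrow> finite (supp v) \<Longrightarrow> finite {k. v (sel k) \<noteq> 0}"
proof -
  assume s: "selok sel" and f: "finite (supp v)"
  have "{k. v (sel k) \<noteq> 0} = sel -` supp v" by (auto simp: supp_def)
  then show ?thesis using finite_vimageI[OF f selok_inj[OF s]] by simp
qed

lemma sum_nz: "(\<Sum>i\<in>F. g i) \<noteq> 0 \<Longrightarrow> \<exists>i\<in>F. g i \<noteq> 0"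
  by (meson sum.neutral)

lemma nums: "(2::'a::field) \<noteq> 0 \<Longrightarrow> (4::'a) \<noteq> 0 \<and> (8::'a) \<noteq> 0 \<and> (16::'a) \<noteq> 0 \<and> (32::'a) \<noteq> 0 \<and> (64::'a) \<noteq> 0"
proof -
  assume t: "(2::'a) \<noteq> 0"
  have "(4::'a) = 2^2" "(8::'a) = 2^3" "(16::'a) = 2^4" "(32::'a) = 2^5" "(64::'a) = 2^6" by simp_all
  then show ?thesis using t by (metis power_not_zero)
qed

lemma Phi_eq: "finite K \<Longrightarrow> {k. v (sel k) \<noteq> 0} \<subseteq> K \<Longrightarrow> PhiS sel v = (\<Sum>k\<in>K. smult (v (sel k)) (Ut k))"
  unfolding PhiS_def by (rule sum.mono_neutral_left) auto

lemma Phi_lsum: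
  assumes s: "selok sel" and F: "finite F" and fs: "\<And>i. i \<in> F \<Longrightarrow> finite (supp (f i))"
  shows "PhiS sel (\<lambda>c. \<Sum>i\<in>F. a i * f i c) = (\<Sum>i\<in>F. smult (a i) (PhiS sel (f i)))"
proof -
  define K where "K = (\<Union>i\<in>F. {k. f i (sel k) \<noteq> 0})"
  have K: "finite K" unfolding K_def using F fs fin_sel[OF s] by auto
  have sub: "{k. (\<Sum>i\<in>F. a i * f i (sel k)) \<noteq> 0} \<subseteq> K"
    unfolding K_def by (auto dest!: sum_nz)
  have "PhiS sel (\<lambda>c. \<Sum>i\<in>F. a i * f i c) = (\<Sum>k\<in>K. smult (\<Sum>i\<in>F. a i * f i (sel k)) (Ut k))"
    by (rule Phi_eq[OF K]) (use sub in simp)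
  also have "\<dots> = (\<Sum>k\<in>K. \<Sum>i\<in>F. smult (a i) (smult (f i (sel k)) (Ut k)))"
    by (simp add: smult_sum)
  also have "\<dots> = (\<Sum>i\<in>F. smult (a i) (\<Sum>k\<in>K. smult (f i (sel k)) (Ut k)))"
    by (subst sum.swap) (simp add: smult_sum_right)
  also have "\<dots> = (\<Sum>i\<in>F. smult (a i) (PhiS sel (f i)))"
    by (intro sum.cong refl arg_cong[where f="smult _"] Phi_eq[symmetric] K) (auto simp: K_def)
  finally show ?thesis .
qed

lemma Phi_vadd: "selok sel \<Longrightarrow> fsv u \<Longrightarrow> fsv v \<Longrightarrow> PhiS sel (vadd u v) = PhiS sel u + PhiS sel v"
proof -
  assume s: "selok sel" and u: "fsv u" and v: "fsv v"
  have "vadd u v = (\<lambda>c. \<Sum>i\<in>{0::nat,1}. 1 * (if i = 0 then u else v) c)"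
    by (simp add: vadd_def)
  then show ?thesis using Phi_lsum[OF s, of "{0::nat,1}" "\<lambda>i. if i = 0 then u else v" "\<lambda>_. 1"] u v
    by (simp add: fsv_def)
qed

lemma Phi_smul: "selok sel \<Longrightarrow> fsv v \<Longrightarrow> PhiS sel (smul c v) = smult c (PhiS sel v)"
proof -
  assume s: "selok sel" and v: "fsv v"
  have "smul c v = (\<lambda>x. \<Sum>i\<in>{0::nat}. c * v x)"
    by (simp add: smul_def)
  then show ?thesis using Phi_lsum[OF s, of "{0::nat}" "\<lambda>i. v" "\<lambda>_. c"] v
    by (simp add: fsv_def)
qed

lemma Phi_vsub: "selok sel \<Longrightarrow> fsv u \<Longrightarrow> fsv v \<Longrightarrow> PhiS sel (vsub u v) = PhiS sel u - PhiS sel v"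
proof -
  assume s: "selok sel" and u: "fsv u" and v: "fsv v"
  have "vsub u v = (\<lambda>c. \<Sum>i\<in>{0::nat,1}. (if i = 0 then 1 else -1) * (if i = 0 then u else v) c)"
    by (simp add: vsub_def)
  then show ?thesis using Phi_lsum[OF s, of "{0::nat,1}" "\<lambda>i. if i = 0 then u else v" "\<lambda>i. if i = 0 then 1 else -1"] u v
    by (simp add: fsv_def)
qed

lemma Phi_zerov [simp]: "PhiS sel zerov = 0" by (simp add: PhiS_def zerov_def)

lemma Phi_ev: "selok sel \<Longrightarrow> PhiS sel (ev b) = (if \<exists>k. b = sel k then Ut (THE k. b = sel k) else 0)"
proof -
  assume s: "selok sel"
  show ?thesis
  proof (cases "\<exists>k. b = sel k")
    case True
    then obtain k where k: "b = sel k" by blast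
    have the: "(THE k. b = sel k) = k" using k selok_inj[OF s] by (auto dest: injD)
    have "{k'. ev b (sel k') \<noteq> (0::'a)} = {k}" using k selok_inj[OF s] by (auto simp: ev_def dest: injD)
    then show ?thesis using True the k by (simp add: PhiS_def ev_def)
  next
    case False
    then have "{k'. ev b (sel k') \<noteq> (0::'a)} = {}" by (auto simp: ev_def)
    then show ?thesis using False by (simp add: PhiS_def)
  qed
qed

lemma fsv_ev [simp]: "fsv (ev b)" by (simp add: fsv_def)
lemma fsv_simps [simp]: "fsv zerov" "fsv (pv r k)" "fsv (zv r k)" "fsv (av i)" "fsv (sv j)" "fsv (bm b b')"
  by (simp_all add: fsv_Hc)
lemma fsv_vadd [simp]: "fsv u \<Longrightarrow> fsv v \<Longrightarrow> fsv (vadd u v)"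
  unfolding fsv_def by (meson finite_Un finite_subset supp_vadd)
lemma fsv_vsub [simp]: "fsv u \<Longrightarrow> fsv v \<Longrightarrow> fsv (vsub u v)"
  unfolding fsv_def by (meson finite_Un finite_subset supp_vsub)
lemma fsv_smul [simp]: "fsv u \<Longrightarrow> fsv (smul c u)"
  unfolding fsv_def by (meson finite_subset supp_smul)

lemma Ut_invalid: "\<not> (k > 0 \<and> 3 dvd k) \<Longrightarrow> Ut k = 0"
  by (auto simp: Ut_def)

lemma selok_simps [simp]: "selok P1" "selok P2" by (simp_all add: selok_def)

lemma Phi_ev_simps [simp]: "PhiS P1 (ev (P1 k)) = Ut k" "PhiS P1 (ev (P2 k)) = 0"
   "PhiS P2 (ev (P1 k)) = 0" "PhiS P2 (ev (P2 k)) = Ut k"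
proof -
  have "{k'. ev (P1 k) (P1 k') \<noteq> (0::'a)} = {k}" "{k'. ev (P2 k) (P2 k') \<noteq> (0::'a)} = {k}"
    "{k'. ev (P1 k) (P2 k') \<noteq> (0::'a)} = {}" "{k'. ev (P2 k) (P1 k') \<noteq> (0::'a)} = {}"
    by (auto simp: ev_def)
  then show "PhiS P1 (ev (P1 k)) = Ut k" "PhiS P1 (ev (P2 k)) = 0"
   "PhiS P2 (ev (P1 k)) = 0" "PhiS P2 (ev (P2 k)) = Ut k"
    by (simp_all add: PhiS_def ev_def)
qed

lemma P12_ne [simp]: "P1 \<noteq> P2" "P2 \<noteq> P1" by (auto simp: fun_eq_iff)

lemma Phi_pv: "selok sel \<Longrightarrow> PhiS sel (pv r k) = smult (rho sel r) (Ut k)"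
proof -
  assume s: "selok sel"
  have e1: "PhiS sel (ev (P1 k)) = (if sel = P1 then Ut k else 0)"
   and e2: "PhiS sel (ev (P2 k)) = (if sel = P2 then Ut k else 0)"
    using s by (auto simp: Phi_ev selok_def)
  show ?thesis
  proof (cases "k > 0 \<and> 3 dvd k")
    case False
    then have pz: "pv r k = zerov" by (auto simp: pv_def)
    show ?thesis by (simp only: pz Phi_zerov Ut_invalid[OF False] smult_0_right)
  next
    case True
    have m: "r mod 3 = 1 \<or> r mod 3 = 2 \<or> r mod 3 = 0" by presburger
    have s': "sel = P1 \<or> sel = P2" using s by (simp add: selok_def)
    have v: "pv r k = (if r mod 3 = 1 then ev (P1 k) else if r mod 3 = 2 then ev (P2 k)
       else vsub (smul (-1) (ev (P1 k))) (ev (P2 k)))" using True by (simp add: pv_def)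
    show ?thesis
      using m s' unfolding v rho_def
      by (elim disjE) (simp_all add: Phi_vsub Phi_smul)
  qed
qed

lemma Phi_zv: "selok sel \<Longrightarrow> PhiS sel (zv r k) = smult (rho sel (r + 1) - rho sel (r - 1)) (Ut k)"
  by (simp add: zv_def Phi_vsub Phi_pv smult_diff_left)

lemma Phi_ap: "selok sel \<Longrightarrow> PhiS sel (bm_ap i r k) = smult (3/2 * rho sel r - rho sel (-(i + r))) (Ut k)"
  by (simp add: bm_ap_def Phi_vsub Phi_smul Phi_pv smult_diff_left)

lemma helper1: "smult (2*e) (smult z A1 + smult z B1) - smult e (smult z C1 + smult z D1) = smult (e*z) (smult 2 (A1+B1) - (C1+D1::'a::field poly))"
  by (rule poly_eqI) (simp add: ring_distribs mult_ac)

lemma helper2: "smult (e*z) (smult 2 X) = smult ((2*e)*z) X"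
  by (simp add: algebra_simps)

lemma Phi_sp: "(2::'a::field) \<noteq> 0 \<Longrightarrow> selok sel \<Longrightarrow> 3 dvd k \<Longrightarrow>
   PhiS sel (bm_sp j r k :: bidx \<Rightarrow> 'a) = smult (3/4 * rho sel r) (sig j * Ut k)"
proof -
  assume two: "(2::'a) \<noteq> 0" and s: "selok sel" and k: "3 dvd k"
  have q: "(3/4::'a) = 2 * (3/8)" using nums[OF two] by (simp add: field_simps)
  have "PhiS sel (bm_sp j r k :: bidx \<Rightarrow> 'a) = smult (3/4) (smult (rho sel r) (Ut j) + smult (rho sel r) (Ut k))
      - smult (3/8) (smult (rho sel r) (Ut (adiff j k)) + smult (rho sel r) (Ut (j + k)))"
    using s by (simp add: bm_sp_def Phi_vsub Phi_smul Phi_vadd Phi_pv)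
  also have "\<dots> = smult (3/8 * rho sel r) (smult 2 (Ut j + Ut k) - (Ut (adiff j k) + Ut (j + k)))"
    unfolding q by (rule helper1)
  also have "\<dots> = smult (3/8 * rho sel r) (smult 2 (sig j * Ut k))"
    by (simp only: Ut_prod[OF k])
  also have "\<dots> = smult (3/4 * rho sel r) (sig j * Ut k)"
    unfolding q by (rule helper2)
  finally show ?thesis .
qed

lemma Phi_pp: "(2::'a::field) \<noteq> 0 \<Longrightarrow> selok sel \<Longrightarrow> 3 dvd k \<Longrightarrow>
   PhiS sel (bm_pp r h t k :: bidx \<Rightarrow> 'a) = smult (1/4 * (rho sel (-(r + t) + 1) - rho sel (-(r + t) - 1))) (sig h * Ut k)"
proof -
  assume two: "(2::'a) \<noteq> 0" and s: "selok sel" and k: "3 dvd k"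
  define z where "z = (rho sel (-(r + t) + 1) - rho sel (-(r + t) - 1) :: 'a)"
  have q: "(1/4::'a) = 2 * (1/8)" using nums[OF two] by (simp add: field_simps)
  have "PhiS sel (bm_pp r h t k :: bidx \<Rightarrow> 'a) = smult (1/4) (smult z (Ut h) + smult z (Ut k))
      - smult (1/8) (smult z (Ut (adiff h k)) + smult z (Ut (h + k)))"
    using s by (simp add: bm_pp_def Phi_vsub Phi_smul Phi_vadd Phi_zv z_def)
  also have "\<dots> = smult (1/8 * z) (smult 2 (Ut h + Ut k) - (Ut (adiff h k) + Ut (h + k)))"
    unfolding q by (rule helper1)
  also have "\<dots> = smult (1/8 * z) (smult 2 (sig h * Ut k))"
    by (simp only: Ut_prod[OF k])
  also have "\<dots> = smult (1/4 * z) (sig h * Ut k)"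
    unfolding q by (rule helper2)
  finally show ?thesis by (simp add: z_def)
qed

lemma Jc_Hc: "x \<in> Jc \<Longrightarrow> x \<in> Hc" by (simp add: Jc_def)
lemma Jc_fsv [simp]: "x \<in> Jc \<Longrightarrow> fsv x" by (simp add: Jc_def fsv_Hc)

lemma Jc_valid: "x \<in> Jc \<Longrightarrow> selok sel \<Longrightarrow> x (sel k) \<noteq> 0 \<Longrightarrow> k > 0 \<and> 3 dvd k"
proof -
  assume x: "x \<in> Jc" and s: "selok sel" and nz: "x (sel k) \<noteq> 0"
  then have "sel k \<in> supp x" by (simp add: supp_def)
  then have "valid_idx (sel k)" using x by (auto simp: Jc_def Hc_def)
  then show ?thesis using s by (auto simp: selok_def)
qed

lemma Jc_supp: "x \<in> Jc \<Longrightarrow> supp x = P1 ` {k. x (P1 k) \<noteq> 0} \<union> P2 ` {k. x (P2 k) \<noteq> 0}"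
  by (auto simp: Jc_def offP_def isP_def supp_def)

lemma GL:
  assumes x: "x \<in> Jc" and s: "selok sel" and fs: "\<And>b'. fsv (G b')"
    and M: "\<And>k. k > 0 \<Longrightarrow> 3 dvd k \<Longrightarrow> PhiS sel (G (P1 k)) = M1 * Ut k \<and> PhiS sel (G (P2 k)) = M2 * Ut k"
  shows "PhiS sel (\<lambda>c. \<Sum>b'\<in>supp x. x b' * G b' c) = M1 * PhiS P1 x + M2 * PhiS P2 x"
proof -
  define K1 where "K1 = {k. x (P1 k) \<noteq> 0}"
  define K2 where "K2 = {k. x (P2 k) \<noteq> 0}"
  have fx: "finite (supp x)" using x by (simp add: Jc_def Hc_def)
  have fK: "finite K1" "finite K2" unfolding K1_def K2_def using fin_sel[OF selok_simps(1) fx] fin_sel[OF selok_simps(2) fx] by auto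
  have "PhiS sel (\<lambda>c. \<Sum>b'\<in>supp x. x b' * G b' c) = (\<Sum>b'\<in>supp x. smult (x b') (PhiS sel (G b')))"
    by (rule Phi_lsum[OF s fx]) (use fs in \<open>simp add: fsv_def\<close>)
  also have "\<dots> = (\<Sum>b'\<in>P1 ` K1. smult (x b') (PhiS sel (G b'))) + (\<Sum>b'\<in>P2 ` K2. smult (x b') (PhiS sel (G b')))"
    unfolding Jc_supp[OF x] K1_def[symmetric] K2_def[symmetric]
    by (rule sum.union_disjoint) (use fK in auto)
  also have "\<dots> = (\<Sum>k\<in>K1. smult (x (P1 k)) (PhiS sel (G (P1 k)))) + (\<Sum>k\<in>K2. smult (x (P2 k)) (PhiS sel (G (P2 k))))"
    by (simp add: sum.reindex inj_on_def)
  also have "\<dots> = (\<Sum>k\<in>K1. smult (x (P1 k)) (M1 * Ut k)) + (\<Sum>k\<in>K2. smult (x (P2 k)) (M2 * Ut k))"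
  proof -
    have "k \<in> K1 \<Longrightarrow> PhiS sel (G (P1 k)) = M1 * Ut k" for k
      using M Jc_valid[OF x, of P1 k] unfolding K1_def by auto
    moreover have "k \<in> K2 \<Longrightarrow> PhiS sel (G (P2 k)) = M2 * Ut k" for k
      using M Jc_valid[OF x, of P2 k] unfolding K2_def by auto
    ultimately show ?thesis by (intro arg_cong2[where f="(+)"] sum.cong) auto
  qed
  also have "\<dots> = M1 * PhiS P1 x + M2 * PhiS P2 x"
    unfolding PhiS_def K1_def K2_def by (simp add: sum_distrib_left)
  finally show ?thesis .
qed

lemma hmult_ev_Jc: "x \<in> Jc \<Longrightarrow> hmult (ev b) x \<in> Jc"
proof -
  assume x: "x \<in> Jc"
  have sx: "b' \<in> supp x \<Longrightarrow> isP b'" for b'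
    using x by (auto simp: Jc_def offP_def supp_def)
  have fx: "finite (supp x)" using x by (auto simp: Hc_def Jc_def)
  show ?thesis
    unfolding hmult_ev by (rule lin_closed) (auto simp: fx sx Jc_bm)
qed

lemma Phi_hA: "x \<in> Jc \<Longrightarrow> selok sel \<Longrightarrow> PhiS sel (hmult (ev (A i)) x) =
   [:3/2 * rho sel 1 - rho sel (-(i+1)):] * PhiS P1 x + [:3/2 * rho sel 2 - rho sel (-(i+2)):] * PhiS P2 x"
  unfolding hmult_ev by (rule GL) (auto simp: Phi_ap)

lemma Phi_hS: "(2::'a::field) \<noteq> 0 \<Longrightarrow> x \<in> Jc \<Longrightarrow> selok sel \<Longrightarrow> PhiS sel (hmult (ev (S j)) (x :: bidx \<Rightarrow> 'a)) =
   smult (3/4 * rho sel 1) (sig j) * PhiS P1 x + smult (3/4 * rho sel 2) (sig j) * PhiS P2 x"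
  unfolding hmult_ev by (rule GL) (auto simp: Phi_sp)

lemma Phi_hP1: "(2::'a::field) \<noteq> 0 \<Longrightarrow> x \<in> Jc \<Longrightarrow> selok sel \<Longrightarrow> PhiS sel (hmult (ev (P1 h)) (x :: bidx \<Rightarrow> 'a)) =
   smult (1/4 * (rho sel (-(1+1)+1) - rho sel (-(1+1)-1))) (sig h) * PhiS P1 x
   + smult (1/4 * (rho sel (-(1+2)+1) - rho sel (-(1+2)-1))) (sig h) * PhiS P2 x"
  unfolding hmult_ev by (rule GL) (auto simp: Phi_pp[where r=1 and t=1, simplified] Phi_pp[where r=1 and t=2, simplified])

lemma Phi_hP2: "(2::'a::field) \<noteq> 0 \<Longrightarrow> x \<in> Jc \<Longrightarrow> selok sel \<Longrightarrow> PhiS sel (hmult (ev (P2 h)) (x :: bidx \<Rightarrow> 'a)) =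
   smult (1/4 * (rho sel (-(2+1)+1) - rho sel (-(2+1)-1))) (sig h) * PhiS P1 x
   + smult (1/4 * (rho sel (-(2+2)+1) - rho sel (-(2+2)-1))) (sig h) * PhiS P2 x"
  unfolding hmult_ev by (rule GL) (auto simp: Phi_pp[where r=2 and t=1, simplified] Phi_pp[where r=2 and t=2, simplified])

lemma Phi_hgen: "(2::'a::field) \<noteq> 0 \<Longrightarrow> x \<in> Jc \<Longrightarrow> selok sel \<Longrightarrow>
   \<exists>M1 M2. PhiS sel (hmult (ev b) (x :: bidx \<Rightarrow> 'a)) = M1 * PhiS P1 x + M2 * PhiS P2 x"
  by (cases b) (blast intro: Phi_hA Phi_hS Phi_hP1 Phi_hP2)+

definition Qset :: "'a::field poly \<Rightarrow> (bidx \<Rightarrow> 'a) set" where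
  "Qset g = {x \<in> Jc. g dvd PhiS P1 x \<and> g dvd PhiS P2 x}"

lemma Phi_hmult: "y \<in> Hc \<Longrightarrow> x \<in> Jc \<Longrightarrow> selok sel \<Longrightarrow>
   PhiS sel (hmult y x) = (\<Sum>b\<in>supp y. smult (y b) (PhiS sel (hmult (ev b) x)))"
  unfolding hmult_decomp[of y]
  by (rule Phi_lsum) (auto simp: Hc_def fsv_def[symmetric] hmult_ev_Jc)

lemma is_ideal_Qset: "(2::'a::field) \<noteq> 0 \<Longrightarrow> is_ideal (Qset (g :: 'a poly))"
  unfolding is_ideal_def
proof (intro conjI ballI allI)
  assume two: "(2::'a) \<noteq> 0"
  fix x y :: "bidx \<Rightarrow> 'a" assume x: "x \<in> Qset g" and y: "y \<in> Hc"
  have xJ: "x \<in> Jc" using x by (simp add: Qset_def)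
  have "g dvd PhiS sel (hmult y x)" if s: "selok sel" for sel
  proof -
    have "g dvd PhiS sel (hmult (ev b) x)" for b
    proof -
      obtain M1 M2 where "PhiS sel (hmult (ev b) x) = M1 * PhiS P1 x + M2 * PhiS P2 x"
        using Phi_hgen[OF two xJ s] by blast
      then show ?thesis using x by (simp add: Qset_def dvd_add dvd_mult)
    qed
    then show ?thesis unfolding Phi_hmult[OF y xJ s] by (intro dvd_sum) (simp add: dvd_smult)
  qed
  then show "hmult y x \<in> Qset g"
    using is_ideal_Jc xJ y unfolding Qset_def is_ideal_def by auto
next
  fix x y :: "bidx \<Rightarrow> 'a" assume x: "x \<in> Qset g" and y: "y \<in> Qset g"
  then show "vadd x y \<in> Qset g" by (auto simp: Qset_def Phi_vadd dvd_add)
next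
  fix c and x :: "bidx \<Rightarrow> 'a" assume x: "x \<in> Qset g"
  then show "smul c x \<in> Qset g" by (auto simp: Qset_def Phi_smul dvd_smult)
qed (auto simp: Qset_def Jc_def)

lemma Phi_core:
  assumes two: "(2::'a::field) \<noteq> 0" and x: "x \<in> Jc" and s: "selok sel"
    and ne: "{k. x (sel k) \<noteq> 0} \<noteq> {}"
  shows "coeff (PhiS sel (x :: bidx \<Rightarrow> 'a)) (Max {k. x (sel k) \<noteq> 0} div 3) \<noteq> 0
       \<and> degree (PhiS sel x) \<le> Max {k. x (sel k) \<noteq> 0} div 3"
proof -
  define K where "K = {k. x (sel k) \<noteq> 0}"
  define M where "M = Max K"
  have fK: "finite K" unfolding K_def using fin_sel[OF s] x by (auto simp: Jc_def Hc_def)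
  have MK: "M \<in> K" unfolding M_def by (metis K_def Max_in fK ne)
  have val: "k \<in> K \<Longrightarrow> k > 0 \<and> 3 dvd k" for k using Jc_valid[OF x s] by (auto simp: K_def)
  have le: "k \<in> K \<Longrightarrow> k \<le> M" for k unfolding M_def using fK by auto
  have lt: "k \<in> K \<Longrightarrow> k \<noteq> M \<Longrightarrow> k div 3 < M div 3" for k
    using le[of k] val[of k] val[OF MK] by (auto elim!: dvdE)
  have "coeff (PhiS sel x) (M div 3) = (\<Sum>k\<in>K. x (sel k) * coeff (Ut k) (M div 3))"
    by (simp add: PhiS_def K_def coeff_sum)
  also have "\<dots> = x (sel M) * coeff (Ut M) (M div 3) + (\<Sum>k\<in>K - {M}. x (sel k) * coeff (Ut k) (M div 3))"
    using fK MK by (simp add: sum.remove)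
  also have "(\<Sum>k\<in>K - {M}. x (sel k) * coeff (Ut k) (M div 3)) = 0"
  proof (rule sum.neutral, rule ballI)
    fix k assume k: "k \<in> K - {M}"
    have "degree (Ut k :: 'a poly) < M div 3" using Ut_deg[of k, where 'a='a] lt[of k] k by auto
    then show "x (sel k) * coeff (Ut k) (M div 3) = 0" by (simp add: coeff_eq_0)
  qed
  finally have c: "coeff (PhiS sel x) (M div 3) = x (sel M) * coeff (Ut M) (M div 3)" by simp
  have "coeff (Ut M :: 'a poly) (M div 3) \<noteq> 0" using Ut_coeff[OF two] val[OF MK] by auto
  moreover have "x (sel M) \<noteq> 0" using MK by (simp add: K_def)
  ultimately have c2: "coeff (PhiS sel x) (M div 3) \<noteq> 0" using c by simp
  have "degree (PhiS sel x) \<le> M div 3"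
    unfolding PhiS_def K_def[symmetric]
  proof (rule degree_sum_le[OF fK])
    fix k assume "k \<in> K"
    then have "degree (Ut k :: 'a poly) \<le> M div 3" using Ut_deg[of k, where 'a='a] le[of k] div_le_mono[of k M 3] by linarith
    then show "degree (smult (x (sel k)) (Ut k)) \<le> M div 3" by (simp add: degree_smult_le le_trans)
  qed
  then show ?thesis using c2 by (simp add: M_def K_def)
qed

lemma Phi_zero_iff:
  assumes two: "(2::'a::field) \<noteq> 0" and x: "x \<in> Jc" and s: "selok sel"
  shows "PhiS sel (x :: bidx \<Rightarrow> 'a) = 0 \<longleftrightarrow> (\<forall>k. x (sel k) = 0)"
proof
  assume z: "PhiS sel x = 0"
  show "\<forall>k. x (sel k) = 0"
  proof (rule ccontr)
    assume "\<not> (\<forall>k. x (sel k) = 0)"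
    then have "{k. x (sel k) \<noteq> 0} \<noteq> {}" by auto
    then show False using Phi_core[OF two x s] z by simp
  qed
next
  assume "\<forall>k. x (sel k) = 0"
  then show "PhiS sel x = 0" by (simp add: PhiS_def)
qed

lemma Phi_deg:
  assumes two: "(2::'a::field) \<noteq> 0" and x: "x \<in> Jc" and s: "selok sel" and nz: "PhiS sel (x :: bidx \<Rightarrow> 'a) \<noteq> 0"
  shows "x (sel (3 * degree (PhiS sel x))) \<noteq> 0 \<and> (\<forall>k > 3 * degree (PhiS sel x). x (sel k) = 0)
     \<and> 3 * degree (PhiS sel x) > 0"
proof -
  define K where "K = {k. x (sel k) \<noteq> 0}"
  have ne: "K \<noteq> {}" using nz Phi_zero_iff[OF two x s] by (auto simp: K_def)
  have fK: "finite K" unfolding K_def using fin_sel[OF s] x by (auto simp: Jc_def Hc_def)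
  have MK: "Max K \<in> K" using fK ne by auto
  have val: "Max K > 0 \<and> 3 dvd Max K" using Jc_valid[OF x s] MK by (auto simp: K_def)
  have cc: "coeff (PhiS sel x) (Max K div 3) \<noteq> 0" and dl: "degree (PhiS sel x) \<le> Max K div 3"
    using Phi_core[OF two x s] ne unfolding K_def by blast+
  have d: "degree (PhiS sel x) = Max K div 3"
    by (intro antisym dl le_degree cc)
  have e: "3 * degree (PhiS sel x) = Max K" using d val by auto
  have gt: "\<forall>k > Max K. x (sel k) = 0"
    using Max_ge[OF fK] unfolding K_def by (metis (mono_tags) mem_Collect_eq not_le)
  have "x (sel (Max K)) \<noteq> 0" using MK by (simp add: K_def)
  then show ?thesis unfolding e using val gt by blast
qed

lemma Phi_inj:
  assumes two: "(2::'a::field) \<noteq> 0" and x: "x \<in> Jc" and y: "y \<in> Jc"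
    and e1: "PhiS P1 x = PhiS P1 (y :: bidx \<Rightarrow> 'a)" and e2: "PhiS P2 x = PhiS P2 y"
  shows "x = y"
proof -
  have v: "vsub x y \<in> Jc" using x y by simp
  have "PhiS P1 (vsub x y) = 0" "PhiS P2 (vsub x y) = 0"
    using e1 e2 x y by (simp_all add: Phi_vsub)
  then have z1: "\<forall>k. vsub x y (P1 k) = 0" and z2: "\<forall>k. vsub x y (P2 k) = 0"
    using Phi_zero_iff[OF two v] by auto
  have "vsub x y c = 0" for c
  proof (cases "isP c")
    case True then show ?thesis using z1 z2 by (auto simp: isP_def)
  next
    case False then show ?thesis using v by (auto simp: Jc_def offP_def)
  qed
  then show ?thesis by (auto simp: vsub_def fun_eq_iff)
qed

lemma Jc_nz: "(2::'a::field) \<noteq> 0 \<Longrightarrow> x \<in> Jc \<Longrightarrow> x \<noteq> zerov \<Longrightarrow> PhiS P1 (x :: bidx \<Rightarrow> 'a) \<noteq> 0 \<or> PhiS P2 x \<noteq> 0"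
  using Phi_inj[of x zerov] by auto

definition D1 :: "(bidx \<Rightarrow> 'a::field) \<Rightarrow> bidx \<Rightarrow> 'a" where
  "D1 y = vsub (hmult (av 1) y) (smul (1/2) y)"
definition D2 :: "(bidx \<Rightarrow> 'a::field) \<Rightarrow> bidx \<Rightarrow> 'a" where
  "D2 y = vsub (hmult (av 2) y) (smul (1/2) y)"
definition E11 :: "(bidx \<Rightarrow> 'a::field) \<Rightarrow> bidx \<Rightarrow> 'a" where
  "E11 y = smul (1/3) (vsub (smul 2 (D2 y)) (D1 (D2 y)))"
definition E12 :: "(bidx \<Rightarrow> 'a::field) \<Rightarrow> bidx \<Rightarrow> 'a" where
  "E12 y = smul (1/3) (vsub (smul 2 (D1 (D2 y))) (D2 y))"
definition Xop :: "(bidx \<Rightarrow> 'a::field) \<Rightarrow> bidx \<Rightarrow> 'a" where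
  "Xop y = vsub y (smul (4/3) (hmult (sv 3) y))"

lemma vsub_eq: "vsub x y = vadd x (smul (-1) y)"
  by (simp add: vsub_def vadd_def smul_def fun_eq_iff)

lemma ideal_vadd: "is_ideal I \<Longrightarrow> x \<in> I \<Longrightarrow> y \<in> I \<Longrightarrow> vadd x y \<in> I"
  by (simp add: is_ideal_def)
lemma ideal_smul: "is_ideal I \<Longrightarrow> x \<in> I \<Longrightarrow> smul c x \<in> I"
  by (simp add: is_ideal_def)
lemma ideal_vsub: "is_ideal I \<Longrightarrow> x \<in> I \<Longrightarrow> y \<in> I \<Longrightarrow> vsub x y \<in> I"
  by (simp add: is_ideal_def vsub_eq)
lemma ideal_hmult: "is_ideal I \<Longrightarrow> x \<in> I \<Longrightarrow> z \<in> Hc \<Longrightarrow> hmult z x \<in> I"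
  by (simp add: is_ideal_def)
lemma ideal_zerov: "is_ideal I \<Longrightarrow> zerov \<in> I"
  by (simp add: is_ideal_def)

lemma ops_ideal: "is_ideal I \<Longrightarrow> y \<in> I \<Longrightarrow> D1 y \<in> I \<and> D2 y \<in> I \<and> E11 y \<in> I \<and> E12 y \<in> I \<and> Xop y \<in> I"
proof -
  assume I: "is_ideal I" and y: "y \<in> I"
  have d1: "D1 z \<in> I" if "z \<in> I" for z unfolding D1_def using that I
    by (intro ideal_vsub ideal_smul ideal_hmult) auto
  have d2: "D2 z \<in> I" if "z \<in> I" for z unfolding D2_def using that I
    by (intro ideal_vsub ideal_smul ideal_hmult) auto
  show ?thesis unfolding E11_def E12_def Xop_def using d1 d2 y I
    by (intro conjI ideal_vsub ideal_smul ideal_hmult d1 d2) auto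
qed

lemma ops_Jc: "y \<in> Jc \<Longrightarrow> D1 y \<in> Jc \<and> D2 y \<in> Jc \<and> E11 y \<in> Jc \<and> E12 y \<in> Jc \<and> Xop y \<in> Jc"
  using ops_ideal[OF is_ideal_Jc] .

lemma lin1: "(2::'a::field) \<noteq> 0 \<Longrightarrow> smult (3/2 + 1) p - smult (1/2) p = smult 2 (p :: 'a poly)"
  by (rule poly_eqI) (use nums[where 'a='a] in \<open>simp add: field_simps\<close>)
lemma lin2: "(2::'a::field) \<noteq> 0 \<Longrightarrow> smult (3/2 - 1) p + q - smult (1/2) p = (q :: 'a poly)"
  by (rule poly_eqI) (simp add: field_simps)
lemma lin3: "(2::'a::field) \<noteq> 0 \<Longrightarrow> p + smult (3/2 - 1) q - smult (1/2) q = (p :: 'a poly)"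
  by (rule poly_eqI) (simp add: field_simps)

lemma Phi_D1: assumes two: "(2::'a::field) \<noteq> 0" and y: "y \<in> Jc"
  shows "PhiS P1 (D1 (y :: bidx \<Rightarrow> 'a)) = PhiS P2 y \<and> PhiS P2 (D1 y) = smult 2 (PhiS P2 y)"
proof -
  have h: "hmult (av 1) y \<in> Jc" using hmult_ev_Jc[OF y] by (simp add: av_def)
  have "PhiS P1 (D1 y) = smult (3/2 - 1) (PhiS P1 y) + PhiS P2 y - smult (1/2) (PhiS P1 y)"
    using y h by (simp add: D1_def Phi_vsub Phi_smul av_def Phi_hA rho_def)
  also have "\<dots> = PhiS P2 y" by (rule lin2[OF two])
  moreover have "PhiS P2 (D1 y) = smult (3/2 + 1) (PhiS P2 y) - smult (1/2) (PhiS P2 y)"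
    using y h by (simp add: D1_def Phi_vsub Phi_smul av_def Phi_hA rho_def)
  moreover have "\<dots> = smult 2 (PhiS P2 y)" by (rule lin1[OF two])
  ultimately show ?thesis by simp
qed

lemma Phi_D2: assumes two: "(2::'a::field) \<noteq> 0" and y: "y \<in> Jc"
  shows "PhiS P1 (D2 (y :: bidx \<Rightarrow> 'a)) = smult 2 (PhiS P1 y) \<and> PhiS P2 (D2 y) = PhiS P1 y"
proof -
  have h: "hmult (av 2) y \<in> Jc" using hmult_ev_Jc[OF y] by (simp add: av_def)
  have "PhiS P1 (D2 y) = smult (3/2 + 1) (PhiS P1 y) - smult (1/2) (PhiS P1 y)"
    using y h by (simp add: D2_def Phi_vsub Phi_smul av_def Phi_hA rho_def)
  also have "\<dots> = smult 2 (PhiS P1 y)" by (rule lin1[OF two])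
  moreover have "PhiS P2 (D2 y) = PhiS P1 y + smult (3/2 - 1) (PhiS P2 y) - smult (1/2) (PhiS P2 y)"
    using y h by (simp add: D2_def Phi_vsub Phi_smul av_def Phi_hA rho_def)
  moreover have "\<dots> = PhiS P1 y" by (rule lin3[OF two])
  ultimately show ?thesis by simp
qed


lemma lin4: "(3::'a::field) \<noteq> 0 \<Longrightarrow> smult (1/3) (smult 2 (smult 2 p) - p) = (p :: 'a poly)"
  by (rule poly_eqI) (simp add: field_simps)

lemma Phi_E11: assumes two: "(2::'a::field) \<noteq> 0" and three: "(3::'a) \<noteq> 0" and y: "y \<in> Jc"
  shows "PhiS P1 (E11 (y :: bidx \<Rightarrow> 'a)) = PhiS P1 y \<and> PhiS P2 (E11 y) = 0"
proof -
  have d: "D2 y \<in> Jc" "D1 (D2 y) \<in> Jc" using ops_Jc[OF y] ops_Jc[of "D2 y"] by auto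
  have a: "PhiS P1 (D1 (D2 y)) = PhiS P1 y" "PhiS P2 (D1 (D2 y)) = smult 2 (PhiS P1 y)"
    using Phi_D1[OF two d(1)] Phi_D2[OF two y] by auto
  have "PhiS P1 (E11 y) = smult (1/3) (smult 2 (smult 2 (PhiS P1 y)) - PhiS P1 y)"
    using d a Phi_D2[OF two y] by (simp add: E11_def Phi_vsub Phi_smul)
  also have "\<dots> = PhiS P1 y" by (rule lin4[OF three])
  moreover have "PhiS P2 (E11 y) = 0"
    using d a Phi_D2[OF two y] by (simp add: E11_def Phi_vsub Phi_smul)
  ultimately show ?thesis by simp
qed

lemma Phi_E12: assumes two: "(2::'a::field) \<noteq> 0" and three: "(3::'a) \<noteq> 0" and y: "y \<in> Jc"
  shows "PhiS P1 (E12 (y :: bidx \<Rightarrow> 'a)) = 0 \<and> PhiS P2 (E12 y) = PhiS P1 y"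
proof -
  have d: "D2 y \<in> Jc" "D1 (D2 y) \<in> Jc" using ops_Jc[OF y] ops_Jc[of "D2 y"] by auto
  have a: "PhiS P1 (D1 (D2 y)) = PhiS P1 y" "PhiS P2 (D1 (D2 y)) = smult 2 (PhiS P1 y)"
    using Phi_D1[OF two d(1)] Phi_D2[OF two y] by auto
  have "PhiS P2 (E12 y) = smult (1/3) (smult 2 (smult 2 (PhiS P1 y)) - PhiS P1 y)"
    using d a Phi_D2[OF two y] by (simp add: E12_def Phi_vsub Phi_smul)
  also have "\<dots> = PhiS P1 y" by (rule lin4[OF three])
  moreover have "PhiS P1 (E12 y) = 0"
    using d a Phi_D2[OF two y] by (simp add: E12_def Phi_vsub Phi_smul)
  ultimately show ?thesis by simp
qed

lemma Phi_Xop: assumes two: "(2::'a::field) \<noteq> 0" and three: "(3::'a) \<noteq> 0" and y: "y \<in> Jc" and s: "selok sel"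
  shows "PhiS sel (Xop (y :: bidx \<Rightarrow> 'a)) = [:0,1:] * PhiS sel y"
proof -
  have h: "hmult (sv 3) y \<in> Jc" using hmult_ev_Jc[OF y] by (simp add: sv_def)
  have sg: "sig 3 = (1 - [:0,1:] :: 'a poly)" by (simp add: sig_def Ut_def)
  have hs: "PhiS sel (hmult (sv 3) y) = smult (3/4) (sig 3 * PhiS sel y)"
    using s Phi_hS[OF two y s, of 3] by (auto simp: selok_def sv_def rho_def)
  have t12: "(12::'a) \<noteq> 0"
  proof -
    have "(12::'a) = 4 * 3" by simp
    then show ?thesis using three nums[OF two] by (metis mult_eq_0_iff)
  qed
  have sc: "(4/3) * (3/4::'a) = 1" using three t12 nums[OF two] by (simp add: field_simps)
  have "PhiS sel (Xop y) = PhiS sel y - smult ((4/3) * (3/4)) (sig 3 * PhiS sel y)"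
    using y h s by (simp add: Xop_def Phi_vsub Phi_smul hs)
  also have "\<dots> = PhiS sel y - (1 - [:0,1:]) * PhiS sel y"
    by (simp only: sc sg smult_1_left)
  also have "\<dots> = [:0,1:] * PhiS sel y"
    by (simp add: algebra_simps del: mult_pCons_left mult_pCons_right)
  finally show ?thesis .
qed

lemma realize:
  assumes two: "(2::'a::field) \<noteq> 0" and three: "(3::'a) \<noteq> 0"
    and I: "is_ideal I" and yI: "y \<in> I" and y: "(y :: bidx \<Rightarrow> 'a) \<in> Jc"
  shows "\<exists>z. z \<in> I \<and> z \<in> Jc \<and> PhiS P1 z = q * PhiS P1 y \<and> PhiS P2 z = q * PhiS P2 y"
proof (induction q)
  case 0
  then show ?case using ideal_zerov[OF I] by (intro exI[of _ zerov]) simp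
next
  case (pCons a p)
  then obtain z where z: "z \<in> I" "z \<in> Jc" "PhiS P1 z = p * PhiS P1 y" "PhiS P2 z = p * PhiS P2 y" by blast
  define w where "w = vadd (smul a y) (Xop z)"
  have wI: "w \<in> I" unfolding w_def using ops_ideal[OF I z(1)] I yI by (intro ideal_vadd ideal_smul) auto
  have wJ: "w \<in> Jc" unfolding w_def using ops_Jc[OF z(2)] y by simp
  have x: "Xop z \<in> Jc" using ops_Jc[OF z(2)] by simp
  have "PhiS sel w = pCons a p * PhiS sel y" if "sel = P1 \<or> sel = P2" and "PhiS sel z = p * PhiS sel y" for sel
  proof -
    have s: "selok sel" using that by (simp add: selok_def)
    show ?thesis unfolding w_def using y x s that(2)
      by (simp add: Phi_vadd Phi_smul Phi_Xop[OF two three z(2) s])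
  qed
  then show ?case using wI wJ z by blast
qed

lemma ig_least: "is_ideal I \<Longrightarrow> G \<subseteq> I \<Longrightarrow> ideal_gen G \<subseteq> I"
  unfolding ideal_gen_def by blast

lemma ig_sub: "G \<subseteq> ideal_gen G"
  unfolding ideal_gen_def by blast

lemma ig_ideal: "G \<subseteq> (Hc :: (bidx \<Rightarrow> 'a::field) set) \<Longrightarrow> is_ideal (ideal_gen G)"
proof -
  assume G: "G \<subseteq> Hc"
  define F where "F = {I. is_ideal I \<and> G \<subseteq> I}"
  have HF: "Hc \<in> F" using G is_ideal_Hc by (simp add: F_def)
  have ig: "ideal_gen G = \<Inter>F" by (simp add: ideal_gen_def F_def)
  have mem: "I \<in> F \<Longrightarrow> is_ideal I" for I by (simp add: F_def)
  show ?thesis unfolding ig is_ideal_def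
  proof (intro conjI ballI allI)
    show "\<Inter>F \<subseteq> Hc" using HF by blast
    show "zerov \<in> \<Inter>F" using mem by (auto simp: is_ideal_def)
  next
    fix x y assume "x \<in> \<Inter>F" "y \<in> \<Inter>F"
    then show "vadd x y \<in> \<Inter>F" using mem by (auto simp: is_ideal_def)
  next
    fix c x assume "x \<in> \<Inter>F"
    then show "smul c x \<in> \<Inter>F" using mem by (auto simp: is_ideal_def)
  next
    fix x y :: "bidx \<Rightarrow> 'a" assume "x \<in> \<Inter>F" "y \<in> Hc"
    then show "hmult y x \<in> \<Inter>F" using mem by (auto simp: is_ideal_def)
  qed
qed

definition jn :: "(bidx \<Rightarrow> 'a::field) \<Rightarrow> nat" where
  "jn x = 4 * p_level x + (if x (P1 (p_level x)) \<noteq> 0 then 1 else 0) + (if x (P2 (p_level x)) \<noteq> 0 then 2 else 0)"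

lemma J_degree_jn: "J_degree x = real (jn x) / 4"
  by (simp add: J_degree_def jn_def field_simps)

lemma finS: "x \<in> Jc \<Longrightarrow> finite {k. x (P1 k) \<noteq> 0 \<or> x (P2 k) \<noteq> 0}"
proof -
  assume x: "x \<in> Jc"
  have f: "finite (supp x)" using x by (simp add: Jc_def Hc_def)
  have "{k. x (P1 k) \<noteq> 0 \<or> x (P2 k) \<noteq> 0} = {k. x (P1 k) \<noteq> 0} \<union> {k. x (P2 k) \<noteq> 0}" by auto
  then show ?thesis using fin_sel[OF selok_simps(1) f] fin_sel[OF selok_simps(2) f] by simp
qed

lemma jd1:
  assumes two: "(2::'a::field) \<noteq> 0" and x: "x \<in> Jc" and z2: "PhiS P2 (x :: bidx \<Rightarrow> 'a) = 0" and n1: "PhiS P1 x \<noteq> 0"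
  shows "jn x = 12 * degree (PhiS P1 x) + 1"
proof -
  define d where "d = degree (PhiS P1 x)"
  have a: "x (P1 (3 * d)) \<noteq> 0" "\<forall>k > 3 * d. x (P1 k) = 0"
    using Phi_deg[OF two x selok_simps(1) n1] unfolding d_def by blast+
  have b: "\<forall>k. x (P2 k) = 0" using Phi_zero_iff[OF two x selok_simps(2)] z2 by simp
  have "p_level x = 3 * d"
    unfolding p_level_def
  proof (rule Max_eqI)
    show "finite {k. x (P1 k) \<noteq> 0 \<or> x (P2 k) \<noteq> 0}" by (rule finS[OF x])
  next
    fix k assume "k \<in> {k. x (P1 k) \<noteq> 0 \<or> x (P2 k) \<noteq> 0}"
    then have "x (P1 k) \<noteq> 0" using b by auto
    then show "k \<le> 3 * d" using a(2) not_le by blast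
  next
    show "3 * d \<in> {k. x (P1 k) \<noteq> 0 \<or> x (P2 k) \<noteq> 0}" using a by simp
  qed
  then show ?thesis using a b by (simp add: jn_def d_def)
qed

lemma jd2:
  assumes two: "(2::'a::field) \<noteq> 0" and x: "x \<in> Jc" and n2: "PhiS P2 (x :: bidx \<Rightarrow> 'a) \<noteq> 0"
  shows "jn x \<ge> 12 * degree (PhiS P2 x) + 2"
proof -
  define d where "d = degree (PhiS P2 x)"
  have a: "x (P2 (3 * d)) \<noteq> 0"
    using Phi_deg[OF two x selok_simps(2) n2] unfolding d_def by blast
  have "3 * d \<le> p_level x"
    unfolding p_level_def by (rule Max_ge[OF finS[OF x]]) (use a in simp)
  then consider "p_level x = 3 * d" | "p_level x \<ge> 3 * d + 1" by linarith
  then show ?thesis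
  proof cases
    case 1 then show ?thesis using a by (simp add: jn_def d_def)
  next
    case 2 then show ?thesis by (simp add: jn_def d_def)
  qed
qed

lemma main4:
  assumes two: "(2::'a::field) \<noteq> 0" and three: "(3::'a) \<noteq> 0"
    and I: "is_ideal I" and IJ: "I \<subseteq> Jc" and xI: "x \<in> I" and nz: "(x :: bidx \<Rightarrow> 'a) \<noteq> zerov"
    and mn: "\<forall>y\<in>I. y \<noteq> zerov \<longrightarrow> jn x \<le> jn y"
  shows "PhiS P2 x = 0 \<and> PhiS P1 x \<noteq> 0 \<and> I = ideal_gen {x}"
proof -
  have xJ: "x \<in> Jc" using xI IJ by auto
  have inJ: "y \<in> I \<Longrightarrow> y \<in> Jc" for y using IJ by auto
  have P2: "PhiS P2 x = 0"
  proof (rule ccontr)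
    assume n2: "PhiS P2 x \<noteq> 0"
    define z where "z = E11 (D1 x)"
    have zI: "z \<in> I" unfolding z_def using ops_ideal[OF I xI] ops_ideal[OF I, of "D1 x"] by auto
    have d1J: "D1 x \<in> Jc" using ops_Jc[OF xJ] by simp
    have zJ: "z \<in> Jc" using zI IJ by auto
    have p1: "PhiS P1 z = PhiS P2 x" and p2: "PhiS P2 z = 0"
      unfolding z_def using Phi_E11[OF two three d1J] Phi_D1[OF two xJ] by auto
    have znz: "z \<noteq> zerov" using p1 n2 by auto
    have "jn z = 12 * degree (PhiS P2 x) + 1" using jd1[OF two zJ p2] p1 n2 by simp
    moreover have "jn x \<ge> 12 * degree (PhiS P2 x) + 2" by (rule jd2[OF two xJ n2])
    moreover have "jn x \<le> jn z" using mn zI znz by auto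
    ultimately show False by simp
  qed
  have P1: "PhiS P1 x \<noteq> 0" using Jc_nz[OF two xJ nz] P2 by simp
  define G where "G = ideal_gen {x}"
  have xH: "x \<in> Hc" using xJ by (simp add: Jc_def)
  have GI: "is_ideal G" unfolding G_def by (rule ig_ideal) (use xH in simp)
  have xG: "x \<in> G" unfolding G_def using ig_sub by blast
  have GsI: "G \<subseteq> I" unfolding G_def by (rule ig_least[OF I]) (use xI in simp)
  have jx: "jn x = 12 * degree (PhiS P1 x) + 1" by (rule jd1[OF two xJ P2 P1])
  have C: "\<exists>w'. w' \<in> G \<and> w' \<in> Jc \<and> PhiS P1 w' = p \<and> PhiS P2 w' = 0"
    if w: "w \<in> I" "PhiS P1 w = p" "PhiS P2 w = 0" for w p
  proof -
    define q where "q = p div PhiS P1 x"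
    define r where "r = p mod PhiS P1 x"
    obtain z where z: "z \<in> G" "z \<in> Jc" "PhiS P1 z = q * PhiS P1 x" "PhiS P2 z = q * PhiS P2 x"
      using realize[OF two three GI xG xJ, of q] by blast
    define v where "v = vsub w z"
    have vI: "v \<in> I" unfolding v_def using w z GsI I by (intro ideal_vsub) auto
    have vJ: "v \<in> Jc" using vI IJ by auto
    have wJ: "w \<in> Jc" using w IJ by auto
    have pe: "p = q * PhiS P1 x + r" unfolding q_def r_def by (rule div_mult_mod_eq[symmetric])
    have v1: "PhiS P1 v = r" unfolding v_def using wJ z w pe by (simp add: Phi_vsub)
    have v2: "PhiS P2 v = 0" unfolding v_def using wJ z w P2 by (simp add: Phi_vsub)
    have r0: "r = 0"
    proof (rule ccontr)
      assume rn: "r \<noteq> 0"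
      have "degree r < degree (PhiS P1 x)" unfolding r_def using degree_mod_less'[OF P1] rn r_def by simp
      moreover have "jn v = 12 * degree r + 1" using jd1[OF two vJ v2] v1 rn by simp
      moreover have "v \<noteq> zerov" using v1 rn by auto
      then have "jn x \<le> jn v" using mn vI by auto
      ultimately show False using jx by simp
    qed
    show ?thesis using z pe r0 P2 by (intro exI[of _ z]) simp
  qed
  have "I \<subseteq> G"
  proof
    fix y assume yI: "y \<in> I"
    have yJ: "y \<in> Jc" using yI IJ by auto
    have y1I: "E11 y \<in> I" using ops_ideal[OF I yI] by simp
    have y2I: "E11 (D1 y) \<in> I" using ops_ideal[OF I yI] ops_ideal[OF I, of "D1 y"] by auto
    have d1J: "D1 y \<in> Jc" using ops_Jc[OF yJ] by simp
    have e1: "PhiS P1 (E11 y) = PhiS P1 y" "PhiS P2 (E11 y) = 0" using Phi_E11[OF two three yJ] by auto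
    have e2: "PhiS P1 (E11 (D1 y)) = PhiS P2 y" "PhiS P2 (E11 (D1 y)) = 0"
      using Phi_E11[OF two three d1J] Phi_D1[OF two yJ] by auto
    obtain g1 where g1: "g1 \<in> G" "g1 \<in> Jc" "PhiS P1 g1 = PhiS P1 y" "PhiS P2 g1 = 0"
      using C[OF y1I e1] by blast
    obtain g2 where g2: "g2 \<in> G" "g2 \<in> Jc" "PhiS P1 g2 = PhiS P2 y" "PhiS P2 g2 = 0"
      using C[OF y2I e2] by blast
    define g where "g = vadd g1 (E12 g2)"
    have e12J: "E12 g2 \<in> Jc" using ops_Jc[OF g2(2)] by simp
    have gG: "g \<in> G" unfolding g_def using ops_ideal[OF GI g2(1)] g1 GI by (intro ideal_vadd) auto
    have gJ: "g \<in> Jc" unfolding g_def using e12J g1 by simp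
    have "PhiS P1 g = PhiS P1 y" "PhiS P2 g = PhiS P2 y"
      unfolding g_def using g1 g2 e12J Phi_E12[OF two three g2(2)] by (simp_all add: Phi_vadd)
    then have "g = y" using Phi_inj[OF two gJ yJ] by simp
    then show "y \<in> G" using gG by simp
  qed
  then have "I = G" using GsI by auto
  then show ?thesis using P1 P2 G_def by simp
qed

lemma tuple_at: "j < length \<beta> \<Longrightarrow> tuple_elt \<beta> (P1 (3 * (j + 1))) = \<beta> ! j"
proof -
  assume j: "j < length \<beta>"
  have e: "\<And>j'. (P1 (3 * (j + 1)) = P1 (3 * (j' + 1))) = (j' = j)" by auto
  have "tuple_elt \<beta> (P1 (3 * (j + 1))) = (\<Sum>j'<length \<beta>. if j' = j then \<beta> ! j' else 0)"
    unfolding tuple_elt_def ev_def by (intro sum.cong refl) (auto simp: e)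
  also have "\<dots> = \<beta> ! j" using j by simp
  finally show ?thesis .
qed

lemma tuple_off: "(\<forall>j < length \<beta>. c \<noteq> P1 (3 * (j + 1))) \<Longrightarrow> tuple_elt \<beta> c = 0"
  unfolding tuple_elt_def ev_def by (intro sum.neutral) auto

lemma tuple_Jc: "tuple_elt \<beta> \<in> Jc"
proof -
  have s: "supp (tuple_elt \<beta>) \<subseteq> (\<lambda>j. P1 (3 * (j + 1))) ` {..<length \<beta>}"
    using tuple_off[of \<beta>] by (auto simp: supp_def)
  then have f: "finite (supp (tuple_elt \<beta>))" by (rule finite_subset) simp
  have v: "supp (tuple_elt \<beta>) \<subseteq> {b. valid_idx b}" using s by auto
  have o: "offP (tuple_elt \<beta>)" using tuple_off[of \<beta>] by (auto simp: offP_def isP_def)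
  show ?thesis using f v o by (simp add: Jc_def Hc_def)
qed

lemma tuple_P2: "(2::'a::field) \<noteq> 0 \<Longrightarrow> PhiS P2 (tuple_elt (\<beta> :: 'a list)) = 0"
  using Phi_zero_iff[OF _ tuple_Jc selok_simps(2)] tuple_off[of \<beta>] by auto

lemma tuple_nz: "valid_tuple \<beta> \<Longrightarrow> tuple_elt \<beta> \<noteq> zerov"
proof -
  assume v: "valid_tuple \<beta>"
  define j where "j = length \<beta> - 1"
  have j: "j < length \<beta>" using v by (simp add: valid_tuple_def j_def)
  have "tuple_elt \<beta> (P1 (3 * (j + 1))) = \<beta> ! j" by (rule tuple_at[OF j])
  also have "\<dots> = last \<beta>" using v by (simp add: valid_tuple_def j_def last_conv_nth)
  finally have "tuple_elt \<beta> (P1 (3 * (j + 1))) \<noteq> 0" using v by (simp add: valid_tuple_def)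
  then show ?thesis by (auto simp: zerov_def)
qed

lemma tuple_smul: "tuple_elt (map (\<lambda>b. c * b) \<beta>) = smul c (tuple_elt \<beta>)"
  by (simp add: tuple_elt_def smul_def sum_distrib_left mult.assoc fun_eq_iff)

lemma tuple_inj:
  assumes vb: "valid_tuple \<beta>" and vg: "valid_tuple \<gamma>" and e: "tuple_elt \<beta> = tuple_elt \<gamma>"
  shows "\<beta> = \<gamma>"
proof -
  have len: "length \<gamma> \<le> length \<beta>" if vb: "valid_tuple \<beta>" and vg: "valid_tuple \<gamma>" and e: "tuple_elt \<beta> = tuple_elt \<gamma>"
    for \<beta> \<gamma> :: "'a list"
  proof (rule ccontr)
    assume "\<not> length \<gamma> \<le> length \<beta>"
    then have lt: "length \<beta> < length \<gamma>" by simp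
    define j where "j = length \<gamma> - 1"
    have j: "j < length \<gamma>" using lt by (simp add: j_def)
    have "tuple_elt \<gamma> (P1 (3 * (j + 1))) = \<gamma> ! j" by (rule tuple_at[OF j])
    also have "\<dots> = last \<gamma>" using vg by (simp add: valid_tuple_def j_def last_conv_nth)
    finally have "tuple_elt \<gamma> (P1 (3 * (j + 1))) = last \<gamma>" .
    moreover have "tuple_elt \<beta> (P1 (3 * (j + 1))) = 0"
      by (rule tuple_off) (use lt j_def in auto)
    ultimately show False using e vg by (simp add: valid_tuple_def)
  qed
  have l: "length \<beta> = length \<gamma>" using len[OF vb vg e] len[OF vg vb e[symmetric]] by simp
  show ?thesis
  proof (rule nth_equalityI[OF l])
    fix j assume "j < length \<beta>"
    then show "\<beta> ! j = \<gamma> ! j" using tuple_at[of j \<beta>] tuple_at[of j \<gamma>] e l by simp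
  qed
qed

lemma to_tuple:
  assumes two: "(2::'a::field) \<noteq> 0" and x: "x \<in> Jc" and z2: "PhiS P2 (x :: bidx \<Rightarrow> 'a) = 0" and n1: "PhiS P1 x \<noteq> 0"
  shows "\<exists>\<beta>. valid_tuple \<beta> \<and> x = tuple_elt \<beta>"
proof -
  define d where "d = degree (PhiS P1 x)"
  have a: "x (P1 (3 * d)) \<noteq> 0" "\<forall>k > 3 * d. x (P1 k) = 0" "3 * d > 0"
    using Phi_deg[OF two x selok_simps(1) n1] unfolding d_def by blast+
  have b: "\<forall>k. x (P2 k) = 0" using Phi_zero_iff[OF two x selok_simps(2)] z2 by simp
  define \<beta> where "\<beta> = map (\<lambda>j. x (P1 (3 * (j + 1)))) [0..<d]"
  have lb: "length \<beta> = d" by (simp add: \<beta>_def)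
  have d0: "d > 0" using a by simp
  have vb: "valid_tuple \<beta>"
  proof -
    have ne: "\<beta> \<noteq> []" using lb d0 by auto
    have dd: "d - 1 + 1 = d" using d0 by simp
    have e3: "3 + 3 * (d - Suc 0) = 3 * d" using d0 by (cases d) auto
    have "\<beta> ! (d - 1) = x (P1 (3 * d))" using d0 by (simp add: \<beta>_def e3)
    then have "last \<beta> = x (P1 (3 * d))" using ne lb by (simp add: last_conv_nth)
    then show ?thesis using a ne by (simp add: valid_tuple_def)
  qed
  have "x c = tuple_elt \<beta> c" for c
  proof (cases "\<exists>j < d. c = P1 (3 * (j + 1))")
    case True
    then obtain j where j: "j < d" "c = P1 (3 * (j + 1))" by blast
    then show ?thesis using tuple_at[of j \<beta>] lb by (simp add: \<beta>_def)
  next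
    case False
    then have t: "tuple_elt \<beta> c = 0" using lb by (intro tuple_off) auto
    have "x c = 0"
    proof (cases "isP c")
      case False then show ?thesis using x by (simp add: Jc_def offP_def)
    next
      case True
      then obtain k where k: "c = P1 k \<or> c = P2 k" by (auto simp: isP_def)
      show ?thesis
      proof (cases "c = P2 k")
        case True then show ?thesis using b by simp
      next
        case c1: False
        then have c: "c = P1 k" using k by simp
        show ?thesis
        proof (rule ccontr)
          assume nz: "x c \<noteq> 0"
          then have vk: "k > 0 \<and> 3 dvd k" using Jc_valid[OF x selok_simps(1)] c by simp
          then obtain m where m: "k = 3 * m" by blast
          have "\<not> k > 3 * d" using a(2) nz c by blast
          then have kd: "k \<le> 3 * d" by simp
          have m0: "m > 0" using m vk by simp
          have md: "m - 1 < d" using kd m m0 by simp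
          have km: "c = P1 (3 * ((m - 1) + 1))" using c m m0 by simp
          show False using False md km by blast
        qed
      qed
    qed
    then show ?thesis using t by simp
  qed
  then have "x = tuple_elt \<beta>" by auto
  then show ?thesis using vb by blast
qed

lemma assoc_poly:
  assumes "p dvd q" "q dvd p" "(p :: 'a::field poly) \<noteq> 0"
  shows "\<exists>c. c \<noteq> 0 \<and> q = smult c p"
proof -
  obtain r where r: "q = p * r" using assms(1) by blast
  obtain s where s: "p = q * s" using assms(2) by blast
  have e: "p * (r * s) = p * 1"
  proof -
    have "p * (r * s) = (p * r) * s" by (simp only: mult.assoc)
    also have "\<dots> = q * s" using r by simp
    also have "\<dots> = p" using s by simp
    finally show ?thesis by simp
  qed
  have "r * s = 1" using e mult_left_cancel[OF assms(3), of "r * s" 1] by blast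
  then have "r dvd 1" by (metis dvdI)
  then obtain c where c: "r = [:c:]" "c dvd 1" using is_unit_poly_iff by blast
  then have "c \<noteq> 0" by auto
  then show ?thesis using r c by (intro exI[of _ c]) (simp add: mult.commute)
qed


definition Gs :: "(bidx \<Rightarrow> 'a::field) set" where
  "Gs = {ev b | b k. k > 0 \<and> 3 dvd k \<and> (b = P1 k \<or> b = P2 k)}"

lemma Jid_eq: "Jid = ideal_gen Gs" by (simp add: Jid_def Gs_def)

lemma Gs_Jc: "Gs \<subseteq> Jc"
proof
  fix v :: "bidx \<Rightarrow> 'a" assume "v \<in> Gs"
  then obtain b k where v: "v = ev b" "k > 0" "3 dvd k" "b = P1 k \<or> b = P2 k" unfolding Gs_def by blast
  have "valid_idx b" using v(2,3,4) by (elim disjE) simp_all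
  then have "ev b \<in> (Hc :: (bidx \<Rightarrow> 'a) set)" by (rule Hc_ev)
  moreover have "isP b" using v(4) unfolding isP_def by blast
  then have "offP (ev b :: bidx \<Rightarrow> 'a)" unfolding offP_def ev_def by auto
  ultimately show "v \<in> Jc" using v by (simp add: Jc_def)
qed

lemma Jid_ideal: "is_ideal (Jid :: (bidx \<Rightarrow> 'a::field) set)"
  unfolding Jid_eq by (rule ig_ideal[OF order_trans[OF Gs_Jc Jc_sub]])

lemma Jid_Jc: "Jid \<subseteq> Jc"
  unfolding Jid_eq by (rule ig_least[OF is_ideal_Jc Gs_Jc])

lemma tuple_Jid: "tuple_elt (\<beta> :: 'a::field list) \<in> Jid"
proof -
  have "(\<lambda>c. \<Sum>j<length \<beta>. (\<beta> ! j) * ev (P1 (3 * (j + 1))) c) \<in> (Jid :: (bidx \<Rightarrow> 'a) set)"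
  proof (rule lin_closed)
    show "zerov \<in> (Jid :: (bidx \<Rightarrow> 'a) set)" using Jid_ideal[where 'a='a] by (simp add: is_ideal_def)
    show "\<And>x y. x \<in> Jid \<Longrightarrow> y \<in> Jid \<Longrightarrow> vadd x y \<in> (Jid :: (bidx \<Rightarrow> 'a) set)" using Jid_ideal[where 'a='a] by (simp add: is_ideal_def)
    show "\<And>c x. x \<in> Jid \<Longrightarrow> smul c x \<in> (Jid :: (bidx \<Rightarrow> 'a) set)" using Jid_ideal[where 'a='a] by (simp add: is_ideal_def)
    show "finite {..<length \<beta>}" by simp
    fix j assume "j \<in> {..<length \<beta>}"
    have "ev (P1 (3 * (j + 1))) \<in> (Gs :: (bidx \<Rightarrow> 'a) set)" unfolding Gs_def
      by (rule CollectI, intro exI[of _ "P1 (3 * (j + 1))"] exI[of _ "3 * (j + 1)"]) simp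
    then show "ev (P1 (3 * (j + 1))) \<in> (Jid :: (bidx \<Rightarrow> 'a) set)" unfolding Jid_eq using ig_sub[of Gs] by (rule subsetD[rotated])
  qed
  then show ?thesis by (simp add: tuple_elt_def)
qed

lemma ig_smul: "c \<noteq> 0 \<Longrightarrow> t \<in> Hc \<Longrightarrow> ideal_gen {smul c t} = ideal_gen {t :: bidx \<Rightarrow> 'a::field}"
proof -
  assume c: "c \<noteq> 0" and t: "t \<in> Hc"
  have i1: "is_ideal (ideal_gen {t})" by (rule ig_ideal) (use t in simp)
  have i2: "is_ideal (ideal_gen {smul c t})" by (rule ig_ideal) (use t in simp)
  have a: "t \<in> ideal_gen {t}" "smul c t \<in> ideal_gen {smul c t}" using ig_sub by blast+
  have b: "smul (1/c) (smul c t) = t" using c by (simp add: smul_def fun_eq_iff)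
  have "smul c t \<in> ideal_gen {t}" using ideal_smul[OF i1 a(1)] .
  moreover have "t \<in> ideal_gen {smul c t}" using ideal_smul[OF i2 a(2), of "1/c"] b by simp
  ultimately show ?thesis using ig_least[OF i1, of "{smul c t}"] ig_least[OF i2, of "{t}"] by auto
qed

lemma zero_ideal: "ideal_gen {zerov} = {zerov :: bidx \<Rightarrow> 'a::field}"
proof -
  have z: "is_ideal {zerov :: bidx \<Rightarrow> 'a}"
    unfolding is_ideal_def by (auto simp: hmult_def zerov_def vadd_def smul_def supp_def fun_eq_iff Hc_def)
  have "ideal_gen {zerov} \<subseteq> {zerov :: bidx \<Rightarrow> 'a}" by (rule ig_least[OF z]) simp
  moreover have "zerov \<in> ideal_gen {zerov :: bidx \<Rightarrow> 'a}" using ig_sub by blast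
  ultimately show ?thesis by blast
qed

theorem theorem1p8:
  assumes char2: "(2::'a::field) \<noteq> 0" and char3: "(3::'a) \<noteq> 0"
  shows
    "(\<forall>\<beta>::'a list. valid_tuple \<beta> \<longrightarrow>
        is_ideal (ideal_gen {tuple_elt \<beta>}) \<and> ideal_gen {tuple_elt \<beta>} \<noteq> {zerov}
        \<and> ideal_gen {tuple_elt \<beta>} \<subseteq> (Jid :: (bidx \<Rightarrow> 'a) set))
   \<and> (\<forall>\<beta> \<gamma> :: 'a list. valid_tuple \<beta> \<longrightarrow> valid_tuple \<gamma> \<longrightarrow>
        (ideal_gen {tuple_elt \<beta>} = ideal_gen {tuple_elt \<gamma>} \<longleftrightarrow>
         (\<exists>c. c \<noteq> 0 \<and> \<gamma> = map (\<lambda>b. c * b) \<beta>)))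
   \<and> (\<forall>I :: (bidx \<Rightarrow> 'a) set. is_ideal I \<and> I \<subseteq> Jid \<and> I \<noteq> {zerov} \<longrightarrow>
        (\<exists>\<beta>. valid_tuple \<beta> \<and> I = ideal_gen {tuple_elt \<beta>}))
   \<and> (\<forall>(I :: (bidx \<Rightarrow> 'a) set) x. is_ideal I \<and> I \<subseteq> Jid \<and> x \<in> I \<and> x \<noteq> zerov \<and>
        (\<forall>y\<in>I. y \<noteq> zerov \<longrightarrow> J_degree x \<le> J_degree y) \<longrightarrow>
        (\<exists>\<beta>. valid_tuple \<beta> \<and> x = tuple_elt \<beta> \<and> I = ideal_gen {tuple_elt \<beta>}))
   \<and> (\<forall>I :: (bidx \<Rightarrow> 'a) set. is_ideal I \<and> I \<subseteq> Jid \<longrightarrow>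
        (\<exists>x\<in>Hc. I = ideal_gen {x}))"
proof -
  have tH: "tuple_elt \<beta> \<in> Hc" for \<beta> :: "'a list" using tuple_Jc Jc_sub by blast
  have P1: "\<forall>\<beta>::'a list. valid_tuple \<beta> \<longrightarrow>
        is_ideal (ideal_gen {tuple_elt \<beta>}) \<and> ideal_gen {tuple_elt \<beta>} \<noteq> {zerov}
        \<and> ideal_gen {tuple_elt \<beta>} \<subseteq> (Jid :: (bidx \<Rightarrow> 'a) set)"
  proof (intro allI impI conjI)
    fix \<beta> :: "'a list" assume v: "valid_tuple \<beta>"
    show "is_ideal (ideal_gen {tuple_elt \<beta>})" by (rule ig_ideal) (use tH in simp)
    show "ideal_gen {tuple_elt \<beta>} \<noteq> {zerov}" using ig_sub[of "{tuple_elt \<beta>}"] tuple_nz[OF v] by auto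
    show "ideal_gen {tuple_elt \<beta>} \<subseteq> Jid" by (rule ig_least[OF Jid_ideal]) (simp add: tuple_Jid)
  qed
  have P2: "\<forall>\<beta> \<gamma> :: 'a list. valid_tuple \<beta> \<longrightarrow> valid_tuple \<gamma> \<longrightarrow>
        (ideal_gen {tuple_elt \<beta>} = ideal_gen {tuple_elt \<gamma>} \<longleftrightarrow>
         (\<exists>c. c \<noteq> 0 \<and> \<gamma> = map (\<lambda>b. c * b) \<beta>))"
  proof (intro allI impI iffI)
    fix \<beta> \<gamma> :: "'a list" assume vb: "valid_tuple \<beta>" and vg: "valid_tuple \<gamma>"
    assume "\<exists>c. c \<noteq> 0 \<and> \<gamma> = map (\<lambda>b. c * b) \<beta>"
    then obtain c where c: "c \<noteq> 0" "\<gamma> = map (\<lambda>b. c * b) \<beta>" by blast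
    show "ideal_gen {tuple_elt \<beta>} = ideal_gen {tuple_elt \<gamma>}"
      using ig_smul[OF c(1) tH[of \<beta>]] c(2) by (simp add: tuple_smul)
  next
    fix \<beta> \<gamma> :: "'a list" assume vb: "valid_tuple \<beta>" and vg: "valid_tuple \<gamma>"
    assume eq: "ideal_gen {tuple_elt \<beta>} = ideal_gen {tuple_elt \<gamma>}"
    have dv: "PhiS P1 (tuple_elt b1) dvd PhiS P1 (tuple_elt b2)"
      if e: "ideal_gen {tuple_elt b1} = ideal_gen {tuple_elt b2}" for b1 b2 :: "'a list"
    proof -
      have Q: "is_ideal (Qset (PhiS P1 (tuple_elt b1)))" by (rule is_ideal_Qset[OF char2])
      have "tuple_elt b1 \<in> Qset (PhiS P1 (tuple_elt b1))"
        using tuple_Jc tuple_P2[OF char2] by (simp add: Qset_def)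
      then have "ideal_gen {tuple_elt b1} \<subseteq> Qset (PhiS P1 (tuple_elt b1))" by (intro ig_least[OF Q]) simp
      moreover have "tuple_elt b2 \<in> ideal_gen {tuple_elt b1}" using e ig_sub by blast
      ultimately show ?thesis by (auto simp: Qset_def)
    qed
    have nz: "PhiS P1 (tuple_elt \<beta>) \<noteq> 0"
      using Jc_nz[OF char2 tuple_Jc tuple_nz[OF vb]] tuple_P2[OF char2] by simp
    obtain c where c: "c \<noteq> 0" "PhiS P1 (tuple_elt \<gamma>) = smult c (PhiS P1 (tuple_elt \<beta>))"
      using assoc_poly[OF dv[OF eq] dv[OF eq[symmetric]] nz] by blast
    have "tuple_elt \<gamma> = smul c (tuple_elt \<beta>)"
      by (rule Phi_inj[OF char2 tuple_Jc]) (use c tuple_Jc[where 'a='a] in \<open>simp_all add: Phi_smul tuple_P2[OF char2]\<close>)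
    then have "tuple_elt \<gamma> = tuple_elt (map (\<lambda>b. c * b) \<beta>)" by (simp add: tuple_smul)
    moreover have "valid_tuple (map (\<lambda>b. c * b) \<beta>)" using vb c(1) by (simp add: valid_tuple_def last_map)
    ultimately have "\<gamma> = map (\<lambda>b. c * b) \<beta>" using tuple_inj[OF vg] by blast
    then show "\<exists>c. c \<noteq> 0 \<and> \<gamma> = map (\<lambda>b. c * b) \<beta>" using c(1) by blast
  qed
  have P4: "\<forall>(I :: (bidx \<Rightarrow> 'a) set) x. is_ideal I \<and> I \<subseteq> Jid \<and> x \<in> I \<and> x \<noteq> zerov \<and>
        (\<forall>y\<in>I. y \<noteq> zerov \<longrightarrow> jn x \<le> jn y) \<longrightarrow>
        (\<exists>\<beta>. valid_tuple \<beta> \<and> x = tuple_elt \<beta> \<and> I = ideal_gen {tuple_elt \<beta>})"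
  proof (intro allI impI)
    fix I :: "(bidx \<Rightarrow> 'a) set" and x
    assume h: "is_ideal I \<and> I \<subseteq> Jid \<and> x \<in> I \<and> x \<noteq> zerov \<and> (\<forall>y\<in>I. y \<noteq> zerov \<longrightarrow> jn x \<le> jn y)"
    have IJ: "I \<subseteq> Jc" using h Jid_Jc by blast
    have m: "PhiS P2 x = 0 \<and> PhiS P1 x \<noteq> 0 \<and> I = ideal_gen {x}"
      using main4[OF char2 char3 _ IJ] h by blast
    have xJ: "x \<in> Jc" using h IJ by blast
    obtain \<beta> where "valid_tuple \<beta>" "x = tuple_elt \<beta>" using to_tuple[OF char2 xJ] m by blast
    then show "\<exists>\<beta>. valid_tuple \<beta> \<and> x = tuple_elt \<beta> \<and> I = ideal_gen {tuple_elt \<beta>}" using m by blast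
  qed
  have P3: "\<forall>I :: (bidx \<Rightarrow> 'a) set. is_ideal I \<and> I \<subseteq> Jid \<and> I \<noteq> {zerov} \<longrightarrow>
        (\<exists>\<beta>. valid_tuple \<beta> \<and> I = ideal_gen {tuple_elt \<beta>})"
  proof (intro allI impI)
    fix I :: "(bidx \<Rightarrow> 'a) set" assume h: "is_ideal I \<and> I \<subseteq> Jid \<and> I \<noteq> {zerov}"
    have "zerov \<in> I" using h by (simp add: is_ideal_def)
    then obtain x0 where "x0 \<in> I" "x0 \<noteq> zerov" using h by blast
    then obtain x where x: "x \<in> I \<and> x \<noteq> zerov" "\<forall>y. y \<in> I \<and> y \<noteq> zerov \<longrightarrow> jn x \<le> jn y"
      using ex_has_least_nat[of "\<lambda>y. y \<in> I \<and> y \<noteq> zerov" x0 jn] by blast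
    then show "\<exists>\<beta>. valid_tuple \<beta> \<and> I = ideal_gen {tuple_elt \<beta>}" using P4 h by blast
  qed
  have P4': "\<forall>(I :: (bidx \<Rightarrow> 'a) set) x. is_ideal I \<and> I \<subseteq> Jid \<and> x \<in> I \<and> x \<noteq> zerov \<and>
        (\<forall>y\<in>I. y \<noteq> zerov \<longrightarrow> J_degree x \<le> J_degree y) \<longrightarrow>
        (\<exists>\<beta>. valid_tuple \<beta> \<and> x = tuple_elt \<beta> \<and> I = ideal_gen {tuple_elt \<beta>})"
  proof (intro allI impI)
    fix I :: "(bidx \<Rightarrow> 'a) set" and x
    assume h: "is_ideal I \<and> I \<subseteq> Jid \<and> x \<in> I \<and> x \<noteq> zerov \<and> (\<forall>y\<in>I. y \<noteq> zerov \<longrightarrow> J_degree x \<le> J_degree y)"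
    have "\<forall>y\<in>I. y \<noteq> zerov \<longrightarrow> jn x \<le> jn y" using h by (simp add: J_degree_jn)
    then show "\<exists>\<beta>. valid_tuple \<beta> \<and> x = tuple_elt \<beta> \<and> I = ideal_gen {tuple_elt \<beta>}" using P4 h by blast
  qed
  have P5: "\<forall>I :: (bidx \<Rightarrow> 'a) set. is_ideal I \<and> I \<subseteq> Jid \<longrightarrow> (\<exists>x\<in>Hc. I = ideal_gen {x})"
  proof (intro allI impI)
    fix I :: "(bidx \<Rightarrow> 'a) set" assume h: "is_ideal I \<and> I \<subseteq> Jid"
    show "\<exists>x\<in>Hc. I = ideal_gen {x}"
    proof (cases "I = {zerov}")
      case True then show ?thesis using zero_ideal by (intro bexI[of _ zerov]) auto
    next
      case False then show ?thesis using P3 h tH by blast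
    qed
  qed
  show ?thesis using P1 P2 P3 P4' P5 by blast
qed

end
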